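(* Let $G$ be a group, $j\colon K\to L$ a Dwyer $G$-map of $G$-posets, and $f\colon K\to X$ any map of $G$-posets, and form the pushout $Y=L\cup_K X$ in $G\mathbf{Cat}$. Then $Y$ is a $G$-poset, and for every subgroup $H\le G$ the square of $H$-fixed points $K^H\to X^H$, $K^H\to L^H$, $X^H\to Y^H$, $L^H\to Y^H$ is a pushout (in $\mathbf{Cat}$, equivalently in $\mathbf{Pos}$).
   Context: A subcategory $\mathcal{S}$ of $\mathcal{C}$ is a sieve if every morphism $c\to s$ with $s\in\mathcal{S}$ lies in $\mathcal{S}$ together with $c$; a cosieve dually. A Dwyer $G$-map is a $G$-functor that is the inclusion of a sieve and factors equivariantly as $\mathcal{S}\xrightarrow{i}\mathcal{T}\xrightarrow{j}\mathcal{C}$ with $j$ the inclusion of a cosieve and $i$ an inclusion with an equivariant right adjoint $r$ whose unit $\mathrm{id}\to r\circ i$ is the identity. Posets are regarded as categories; $X^H$ denotes the subposet of $H$-fixed elements. *)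

theory Defs
  imports "HOL-Algebra.Group"
begin

text \<open>A (small) category: objects, arrows, source, target, identities and
  composition (Cmp C g f is g after f, defined when Tgt f = Src g).\<close>

record ('o, 'm) cat =
  Obj :: "'o set"
  Arr :: "'m set"
  Src :: "'m \<Rightarrow> 'o"
  Tgt :: "'m \<Rightarrow> 'o"
  Idt :: "'o \<Rightarrow> 'm"
  Cmp :: "'m \<Rightarrow> 'm \<Rightarrow> 'm"

definition category :: "('o, 'm) cat \<Rightarrow> bool" where
  "category C \<longleftrightarrow>
     (\<forall>f\<in>Arr C. Src C f \<in> Obj C \<and> Tgt C f \<in> Obj C) \<and>
     (\<forall>a\<in>Obj C. Idt C a \<in> Arr C \<and> Src C (Idt C a) = a \<and> Tgt C (Idt C a) = a) \<and>
     (\<forall>f\<in>Arr C. \<forall>g\<in>Arr C. Tgt C f = Src C g \<longrightarrow>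
        Cmp C g f \<in> Arr C \<and> Src C (Cmp C g f) = Src C f \<and> Tgt C (Cmp C g f) = Tgt C g) \<and>
     (\<forall>f\<in>Arr C. Cmp C (Idt C (Tgt C f)) f = f \<and> Cmp C f (Idt C (Src C f)) = f) \<and>
     (\<forall>f\<in>Arr C. \<forall>g\<in>Arr C. \<forall>h\<in>Arr C. Tgt C f = Src C g \<and> Tgt C g = Src C h \<longrightarrow>
        Cmp C h (Cmp C g f) = Cmp C (Cmp C h g) f)"

definition is_poset :: "('o, 'm) cat \<Rightarrow> bool" where
  "is_poset C \<longleftrightarrow> category C \<and>
     (\<forall>f\<in>Arr C. \<forall>f'\<in>Arr C. Src C f = Src C f' \<and> Tgt C f = Tgt C f' \<longrightarrow> f = f') \<and>
     (\<forall>f\<in>Arr C. \<forall>g\<in>Arr C. Src C f = Tgt C g \<and> Tgt C f = Src C g \<longrightarrow> Src C f = Tgt C f)"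

type_synonym ('o, 'm, 'p, 'n) ftr = "('o \<Rightarrow> 'p) \<times> ('m \<Rightarrow> 'n)"

definition is_functor :: "('o, 'm) cat \<Rightarrow> ('p, 'n) cat \<Rightarrow> ('o, 'm, 'p, 'n) ftr \<Rightarrow> bool" where
  "is_functor C D F \<longleftrightarrow>
     (\<forall>a\<in>Obj C. fst F a \<in> Obj D) \<and>
     (\<forall>f\<in>Arr C. snd F f \<in> Arr D \<and> Src D (snd F f) = fst F (Src C f) \<and>
                  Tgt D (snd F f) = fst F (Tgt C f)) \<and>
     (\<forall>a\<in>Obj C. snd F (Idt C a) = Idt D (fst F a)) \<and>
     (\<forall>f\<in>Arr C. \<forall>g\<in>Arr C. Tgt C f = Src C g \<longrightarrow> snd F (Cmp C g f) = Cmp D (snd F g) (snd F f))"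

definition idF :: "('o, 'm, 'o, 'm) ftr" where
  "idF = (id, id)"

definition fcomp :: "('p, 'n, 'q, 'k) ftr \<Rightarrow> ('o, 'm, 'p, 'n) ftr \<Rightarrow> ('o, 'm, 'q, 'k) ftr" where
  "fcomp F F' = (fst F \<circ> fst F', snd F \<circ> snd F')"

definition ftr_eq :: "('o, 'm) cat \<Rightarrow> ('o, 'm, 'p, 'n) ftr \<Rightarrow> ('o, 'm, 'p, 'n) ftr \<Rightarrow> bool" where
  "ftr_eq C F F' \<longleftrightarrow> (\<forall>a\<in>Obj C. fst F a = fst F' a) \<and> (\<forall>f\<in>Arr C. snd F f = snd F' f)"

definition nat_trans ::
  "('o, 'm) cat \<Rightarrow> ('p, 'n) cat \<Rightarrow> ('o, 'm, 'p, 'n) ftr \<Rightarrow> ('o, 'm, 'p, 'n) ftr \<Rightarrow> ('o \<Rightarrow> 'n) \<Rightarrow> bool" where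
  "nat_trans C D F F' \<tau> \<longleftrightarrow>
     (\<forall>a\<in>Obj C. \<tau> a \<in> Arr D \<and> Src D (\<tau> a) = fst F a \<and> Tgt D (\<tau> a) = fst F' a) \<and>
     (\<forall>f\<in>Arr C. Cmp D (\<tau> (Tgt C f)) (snd F f) = Cmp D (snd F' f) (\<tau> (Src C f)))"

definition adjunction ::
  "('o, 'm) cat \<Rightarrow> ('p, 'n) cat \<Rightarrow> ('o, 'm, 'p, 'n) ftr \<Rightarrow> ('p, 'n, 'o, 'm) ftr
     \<Rightarrow> ('o \<Rightarrow> 'm) \<Rightarrow> ('p \<Rightarrow> 'n) \<Rightarrow> bool" where
  "adjunction C D F R \<eta> \<epsilon> \<longleftrightarrow>
     is_functor C D F \<and> is_functor D C R \<and>
     nat_trans C C idF (fcomp R F) \<eta> \<and> nat_trans D D (fcomp F R) idF \<epsilon> \<and>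
     (\<forall>a\<in>Obj C. Cmp D (\<epsilon> (fst F a)) (snd F (\<eta> a)) = Idt D (fst F a)) \<and>
     (\<forall>b\<in>Obj D. Cmp C (snd R (\<epsilon> b)) (\<eta> (fst R b)) = Idt C (fst R b))"

definition is_subcat :: "('o, 'm) cat \<Rightarrow> 'o set \<Rightarrow> 'm set \<Rightarrow> bool" where
  "is_subcat C Ob M \<longleftrightarrow> Ob \<subseteq> Obj C \<and> M \<subseteq> Arr C \<and>
     (\<forall>f\<in>M. Src C f \<in> Ob \<and> Tgt C f \<in> Ob) \<and> (\<forall>a\<in>Ob. Idt C a \<in> M) \<and>
     (\<forall>f\<in>M. \<forall>g\<in>M. Tgt C f = Src C g \<longrightarrow> Cmp C g f \<in> M)"

definition subcat :: "('o, 'm) cat \<Rightarrow> 'o set \<Rightarrow> 'm set \<Rightarrow> ('o, 'm) cat" where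
  "subcat C Ob M = C\<lparr>Obj := Ob, Arr := M\<rparr>"

definition gcat :: "('g, 'b) monoid_scheme \<Rightarrow> ('o, 'm) cat \<Rightarrow> ('g \<Rightarrow> ('o, 'm, 'o, 'm) ftr) \<Rightarrow> bool" where
  "gcat G C act \<longleftrightarrow> category C \<and>
     (\<forall>g\<in>carrier G. is_functor C C (act g)) \<and>
     ftr_eq C (act \<one>\<^bsub>G\<^esub>) idF \<and>
     (\<forall>g\<in>carrier G. \<forall>h\<in>carrier G. ftr_eq C (act (g \<otimes>\<^bsub>G\<^esub> h)) (fcomp (act g) (act h)))"

definition gposet :: "('g, 'b) monoid_scheme \<Rightarrow> ('o, 'm) cat \<Rightarrow> ('g \<Rightarrow> ('o, 'm, 'o, 'm) ftr) \<Rightarrow> bool" where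
  "gposet G C act \<longleftrightarrow> gcat G C act \<and> is_poset C"

definition gfunctor ::
  "('g, 'b) monoid_scheme \<Rightarrow> ('o, 'm) cat \<Rightarrow> ('g \<Rightarrow> ('o, 'm, 'o, 'm) ftr)
     \<Rightarrow> ('p, 'n) cat \<Rightarrow> ('g \<Rightarrow> ('p, 'n, 'p, 'n) ftr) \<Rightarrow> ('o, 'm, 'p, 'n) ftr \<Rightarrow> bool" where
  "gfunctor G C a D b F \<longleftrightarrow> is_functor C D F \<and>
     (\<forall>g\<in>carrier G. ftr_eq C (fcomp F (a g)) (fcomp (b g) F))"

definition fixcat :: "('o, 'm) cat \<Rightarrow> ('g \<Rightarrow> ('o, 'm, 'o, 'm) ftr) \<Rightarrow> 'g set \<Rightarrow> ('o, 'm) cat" where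
  "fixcat C act H = C\<lparr>Obj := {a\<in>Obj C. \<forall>h\<in>H. fst (act h) a = a},
                      Arr := {f\<in>Arr C. \<forall>h\<in>H. snd (act h) f = f}\<rparr>"

text \<open>J : K -> L is (isomorphic onto) the inclusion of a sieve, and factors equivariantly
  as K -> T -> L where T = (OT, MT) is a G-stable cosieve of L, and the corestriction
  i : K -> T of J has an equivariant right adjoint r with identity unit.\<close>

definition dwyer_gmap ::
  "('g, 'b) monoid_scheme \<Rightarrow> ('ko, 'km) cat \<Rightarrow> ('g \<Rightarrow> ('ko, 'km, 'ko, 'km) ftr)
     \<Rightarrow> ('lo, 'lm) cat \<Rightarrow> ('g \<Rightarrow> ('lo, 'lm, 'lo, 'lm) ftr) \<Rightarrow> ('ko, 'km, 'lo, 'lm) ftr \<Rightarrow> bool" where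
  "dwyer_gmap G K aK L aL J \<longleftrightarrow>
     gfunctor G K aK L aL J \<and>
     inj_on (fst J) (Obj K) \<and> inj_on (snd J) (Arr K) \<and>
     (\<forall>\<phi>\<in>Arr L. Tgt L \<phi> \<in> fst J ` Obj K \<longrightarrow> \<phi> \<in> snd J ` Arr K \<and> Src L \<phi> \<in> fst J ` Obj K) \<and>
     (\<exists>OT MT. is_subcat L OT MT \<and>
        (\<forall>\<phi>\<in>Arr L. Src L \<phi> \<in> OT \<longrightarrow> \<phi> \<in> MT \<and> Tgt L \<phi> \<in> OT) \<and>
        (\<forall>g\<in>carrier G. fst (aL g) ` OT \<subseteq> OT \<and> snd (aL g) ` MT \<subseteq> MT) \<and>
        fst J ` Obj K \<subseteq> OT \<and> snd J ` Arr K \<subseteq> MT \<and>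
        (\<exists>r \<epsilon>. gfunctor G (subcat L OT MT) aL K aK r \<and>
               adjunction K (subcat L OT MT) J r (\<lambda>a. Idt K a) \<epsilon>))"

definition comm_square ::
  "('ao, 'am) cat \<Rightarrow> ('bo, 'bm) cat \<Rightarrow> ('co, 'cm) cat \<Rightarrow> ('do, 'dm) cat
    \<Rightarrow> ('ao, 'am, 'bo, 'bm) ftr \<Rightarrow> ('ao, 'am, 'co, 'cm) ftr
    \<Rightarrow> ('bo, 'bm, 'do, 'dm) ftr \<Rightarrow> ('co, 'cm, 'do, 'dm) ftr \<Rightarrow> bool" where
  "comm_square A B C D F J U V \<longleftrightarrow>
     category A \<and> category B \<and> category C \<and> category D \<and>
     is_functor A B F \<and> is_functor A C J \<and> is_functor B D U \<and> is_functor C D V \<and>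
     ftr_eq A (fcomp U F) (fcomp V J)"

definition po_univ ::
  "('ao, 'am) cat \<Rightarrow> ('bo, 'bm) cat \<Rightarrow> ('co, 'cm) cat \<Rightarrow> ('do, 'dm) cat
    \<Rightarrow> ('ao, 'am, 'bo, 'bm) ftr \<Rightarrow> ('ao, 'am, 'co, 'cm) ftr
    \<Rightarrow> ('bo, 'bm, 'do, 'dm) ftr \<Rightarrow> ('co, 'cm, 'do, 'dm) ftr \<Rightarrow> ('eo, 'em) cat \<Rightarrow> bool" where
  "po_univ A B C D F J U V E \<longleftrightarrow>
     (\<forall>P Q. is_functor B E P \<and> is_functor C E Q \<and> ftr_eq A (fcomp P F) (fcomp Q J) \<longrightarrow>
        (\<exists>W. is_functor D E W \<and> ftr_eq B (fcomp W U) P \<and> ftr_eq C (fcomp W V) Q \<and>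
           (\<forall>W'. is_functor D E W' \<and> ftr_eq B (fcomp W' U) P \<and> ftr_eq C (fcomp W' V) Q
                  \<longrightarrow> ftr_eq D W W')))"

definition gpo_univ ::
  "('g, 'b) monoid_scheme
    \<Rightarrow> ('ao, 'am) cat \<Rightarrow> ('g \<Rightarrow> ('ao, 'am, 'ao, 'am) ftr)
    \<Rightarrow> ('bo, 'bm) cat \<Rightarrow> ('g \<Rightarrow> ('bo, 'bm, 'bo, 'bm) ftr)
    \<Rightarrow> ('co, 'cm) cat \<Rightarrow> ('g \<Rightarrow> ('co, 'cm, 'co, 'cm) ftr)
    \<Rightarrow> ('do, 'dm) cat \<Rightarrow> ('g \<Rightarrow> ('do, 'dm, 'do, 'dm) ftr)
    \<Rightarrow> ('ao, 'am, 'bo, 'bm) ftr \<Rightarrow> ('ao, 'am, 'co, 'cm) ftr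
    \<Rightarrow> ('bo, 'bm, 'do, 'dm) ftr \<Rightarrow> ('co, 'cm, 'do, 'dm) ftr
    \<Rightarrow> ('eo, 'em) cat \<Rightarrow> ('g \<Rightarrow> ('eo, 'em, 'eo, 'em) ftr) \<Rightarrow> bool" where
  "gpo_univ G A aA B aB C aC D aD F J U V E aE \<longleftrightarrow>
     (\<forall>P Q. gfunctor G B aB E aE P \<and> gfunctor G C aC E aE Q \<and> ftr_eq A (fcomp P F) (fcomp Q J) \<longrightarrow>
        (\<exists>W. gfunctor G D aD E aE W \<and> ftr_eq B (fcomp W U) P \<and> ftr_eq C (fcomp W V) Q \<and>
           (\<forall>W'. gfunctor G D aD E aE W' \<and> ftr_eq B (fcomp W' U) P \<and> ftr_eq C (fcomp W' V) Q
                  \<longrightarrow> ftr_eq D W W')))"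

text \<open>The universal property is required against all test
  G-categories whose object/arrow types are those of D; in the main theorem D is given
  types large enough to carry the genuine pushout.\<close>

definition gpushout ::
  "('g, 'b) monoid_scheme
    \<Rightarrow> ('ao, 'am) cat \<Rightarrow> ('g \<Rightarrow> ('ao, 'am, 'ao, 'am) ftr)
    \<Rightarrow> ('bo, 'bm) cat \<Rightarrow> ('g \<Rightarrow> ('bo, 'bm, 'bo, 'bm) ftr)
    \<Rightarrow> ('co, 'cm) cat \<Rightarrow> ('g \<Rightarrow> ('co, 'cm, 'co, 'cm) ftr)
    \<Rightarrow> ('do, 'dm) cat \<Rightarrow> ('g \<Rightarrow> ('do, 'dm, 'do, 'dm) ftr)
    \<Rightarrow> ('ao, 'am, 'bo, 'bm) ftr \<Rightarrow> ('ao, 'am, 'co, 'cm) ftr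
    \<Rightarrow> ('bo, 'bm, 'do, 'dm) ftr \<Rightarrow> ('co, 'cm, 'do, 'dm) ftr \<Rightarrow> bool" where
  "gpushout G A aA B aB C aC D aD F J U V \<longleftrightarrow>
     gcat G A aA \<and> gcat G B aB \<and> gcat G C aC \<and> gcat G D aD \<and>
     gfunctor G A aA B aB F \<and> gfunctor G A aA C aC J \<and>
     gfunctor G B aB D aD U \<and> gfunctor G C aC D aD V \<and>
     ftr_eq A (fcomp U F) (fcomp V J) \<and>
     (\<forall>(E :: ('do, 'dm) cat) aE. gcat G E aE \<longrightarrow> gpo_univ G A aA B aB C aC D aD F J U V E aE)"

end

theory Submission
  imports Defs
begin

definition leq :: "('o,'m) cat \<Rightarrow> 'o \<Rightarrow> 'o \<Rightarrow> bool" where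
  "leq C a b \<longleftrightarrow> (\<exists>\<phi>\<in>Arr C. Src C \<phi> = a \<and> Tgt C \<phi> = b)"
definition ar :: "('o,'m) cat \<Rightarrow> 'o \<Rightarrow> 'o \<Rightarrow> 'm" where
  "ar C a b = (THE \<phi>. \<phi> \<in> Arr C \<and> Src C \<phi> = a \<and> Tgt C \<phi> = b)"

lemma catD:
  assumes "category C"
  shows "\<And>f. f\<in>Arr C \<Longrightarrow> Src C f \<in> Obj C" "\<And>f. f\<in>Arr C \<Longrightarrow> Tgt C f \<in> Obj C"
   "\<And>a. a\<in>Obj C \<Longrightarrow> Idt C a \<in> Arr C" "\<And>a. a\<in>Obj C \<Longrightarrow> Src C (Idt C a) = a"
   "\<And>a. a\<in>Obj C \<Longrightarrow> Tgt C (Idt C a) = a"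
   "\<And>f g. f\<in>Arr C \<Longrightarrow> g\<in>Arr C \<Longrightarrow> Tgt C f = Src C g \<Longrightarrow> Cmp C g f \<in> Arr C"
   "\<And>f g. f\<in>Arr C \<Longrightarrow> g\<in>Arr C \<Longrightarrow> Tgt C f = Src C g \<Longrightarrow> Src C (Cmp C g f) = Src C f"
   "\<And>f g. f\<in>Arr C \<Longrightarrow> g\<in>Arr C \<Longrightarrow> Tgt C f = Src C g \<Longrightarrow> Tgt C (Cmp C g f) = Tgt C g"
   "\<And>f. f\<in>Arr C \<Longrightarrow> Cmp C (Idt C (Tgt C f)) f = f"
   "\<And>f. f\<in>Arr C \<Longrightarrow> Cmp C f (Idt C (Src C f)) = f"
   "\<And>f g h. f\<in>Arr C \<Longrightarrow> g\<in>Arr C \<Longrightarrow> h\<in>Arr C \<Longrightarrow> Tgt C f = Src C g \<Longrightarrow> Tgt C g = Src C h \<Longrightarrow>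
        Cmp C h (Cmp C g f) = Cmp C (Cmp C h g) f"
  using assms unfolding category_def by blast+

lemma funD:
  assumes "is_functor C D F"
  shows "\<And>a. a\<in>Obj C \<Longrightarrow> fst F a \<in> Obj D"
   "\<And>f. f\<in>Arr C \<Longrightarrow> snd F f \<in> Arr D" "\<And>f. f\<in>Arr C \<Longrightarrow> Src D (snd F f) = fst F (Src C f)"
   "\<And>f. f\<in>Arr C \<Longrightarrow> Tgt D (snd F f) = fst F (Tgt C f)"
   "\<And>a. a\<in>Obj C \<Longrightarrow> snd F (Idt C a) = Idt D (fst F a)"
   "\<And>f g. f\<in>Arr C \<Longrightarrow> g\<in>Arr C \<Longrightarrow> Tgt C f = Src C g \<Longrightarrow> snd F (Cmp C g f) = Cmp D (snd F g) (snd F f)"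
  using assms unfolding is_functor_def by blast+

lemma posetD:
  assumes "is_poset C"
  shows "category C"
   "\<And>f f'. f\<in>Arr C \<Longrightarrow> f'\<in>Arr C \<Longrightarrow> Src C f = Src C f' \<Longrightarrow> Tgt C f = Tgt C f' \<Longrightarrow> f = f'"
   "\<And>f g. f\<in>Arr C \<Longrightarrow> g\<in>Arr C \<Longrightarrow> Src C f = Tgt C g \<Longrightarrow> Tgt C f = Src C g \<Longrightarrow> Src C f = Tgt C f"
  using assms unfolding is_poset_def by blast+

lemma ar_prop:
  assumes "is_poset C" "leq C a b"
  shows "ar C a b \<in> Arr C" "Src C (ar C a b) = a" "Tgt C (ar C a b) = b"
proof -
  obtain \<psi> where p: "\<psi> \<in> Arr C" "Src C \<psi> = a" "Tgt C \<psi> = b" using assms(2) unfolding leq_def by blast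
  have "\<exists>!\<phi>. \<phi> \<in> Arr C \<and> Src C \<phi> = a \<and> Tgt C \<phi> = b"
  proof (rule ex1I[of _ \<psi>])
    show "\<psi> \<in> Arr C \<and> Src C \<psi> = a \<and> Tgt C \<psi> = b" using p by simp
    fix \<phi> assume "\<phi> \<in> Arr C \<and> Src C \<phi> = a \<and> Tgt C \<phi> = b"
    thus "\<phi> = \<psi>" using posetD(2)[OF assms(1), of \<phi> \<psi>] p by simp
  qed
  from theI'[OF this] show "ar C a b \<in> Arr C" "Src C (ar C a b) = a" "Tgt C (ar C a b) = b"
    unfolding ar_def by auto
qed

lemma ar_eq:
  assumes "is_poset C" "\<phi> \<in> Arr C"
  shows "ar C (Src C \<phi>) (Tgt C \<phi>) = \<phi>"
proof -
  have l: "leq C (Src C \<phi>) (Tgt C \<phi>)" using assms unfolding leq_def by blast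
  note A = ar_prop[OF assms(1) l]
  show ?thesis using posetD(2)[OF assms(1) A(1) assms(2)] A(2,3) by simp
qed

lemma ar_unique:
  assumes "is_poset C" "\<phi> \<in> Arr C" "Src C \<phi> = a" "Tgt C \<phi> = b"
  shows "ar C a b = \<phi>"
  using ar_eq[OF assms(1,2)] assms(3,4) by simp

lemma le_refl: assumes "is_poset C" "a \<in> Obj C" shows "leq C a a"
  unfolding leq_def using catD(3,4,5)[OF posetD(1)[OF assms(1)] assms(2)] by blast

lemma ar_id: assumes "is_poset C" "a \<in> Obj C" shows "ar C a a = Idt C a"
  using ar_unique[OF assms(1)] catD(3,4,5)[OF posetD(1)[OF assms(1)] assms(2)] by blast

lemma le_obj: assumes "is_poset C" "leq C a b" shows "a \<in> Obj C \<and> b \<in> Obj C"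
  using assms(2) unfolding leq_def using catD(1,2)[OF posetD(1)[OF assms(1)]] by blast

lemma le_trans: assumes "is_poset C" "leq C a b" "leq C b c" shows "leq C a c"
proof -
  note P = ar_prop[OF assms(1)]
  have "Cmp C (ar C b c) (ar C a b) \<in> Arr C" "Src C (Cmp C (ar C b c) (ar C a b)) = a"
     "Tgt C (Cmp C (ar C b c) (ar C a b)) = c"
    using catD(6,7,8)[OF posetD(1)[OF assms(1)]] P[OF assms(2)] P[OF assms(3)] by auto
  thus ?thesis unfolding leq_def by blast
qed

lemma le_antisym: assumes "is_poset C" "leq C a b" "leq C b a" shows "a = b"
  using posetD(3)[OF assms(1)] assms unfolding leq_def by metis

lemma ar_cmp: assumes "is_poset C" "leq C a b" "leq C b c"
  shows "Cmp C (ar C b c) (ar C a b) = ar C a c"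
proof -
  note P = ar_prop[OF assms(1)]
  have "Cmp C (ar C b c) (ar C a b) \<in> Arr C" "Src C (Cmp C (ar C b c) (ar C a b)) = a"
     "Tgt C (Cmp C (ar C b c) (ar C a b)) = c"
    using catD(6,7,8)[OF posetD(1)[OF assms(1)]] P[OF assms(2)] P[OF assms(3)] by auto
  thus ?thesis using ar_unique[OF assms(1)] by metis
qed

lemma fun_le: assumes "is_poset C" "is_functor C D F" "leq C a b"
  shows "snd F (ar C a b) \<in> Arr D" "Src D (snd F (ar C a b)) = fst F a" "Tgt D (snd F (ar C a b)) = fst F b"
  using funD[OF assms(2)] ar_prop[OF assms(1,3)] by auto

lemma fun_le2: assumes "is_poset C" "is_functor C D F" "leq C a b" shows "leq D (fst F a) (fst F b)"
  using fun_le[OF assms] unfolding leq_def by blast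

lemma fun_ar: assumes "is_poset C" "is_poset D" "is_functor C D F" "leq C a b"
  shows "snd F (ar C a b) = ar D (fst F a) (fst F b)"
  using fun_le[OF assms(1,3,4)] ar_unique[OF assms(2)] by metis

lemma fun_cmp_ar: assumes "is_poset C" "is_functor C D F" "leq C a b" "leq C b c"
  shows "Cmp D (snd F (ar C b c)) (snd F (ar C a b)) = snd F (ar C a c)"
proof -
  have "snd F (Cmp C (ar C b c) (ar C a b)) = Cmp D (snd F (ar C b c)) (snd F (ar C a b))"
    using funD(6)[OF assms(2)] ar_prop[OF assms(1,3)] ar_prop[OF assms(1,4)] by simp
  thus ?thesis using ar_cmp[OF assms(1,3,4)] by simp
qed

definition thin :: "'o set \<Rightarrow> ('o\<Rightarrow>'o\<Rightarrow>bool) \<Rightarrow> ('o\<Rightarrow>'o\<Rightarrow>'m) \<Rightarrow> ('m\<Rightarrow>'o) \<Rightarrow> ('m\<Rightarrow>'o) \<Rightarrow> ('o,'m) cat" where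
  "thin Ob R e s t = \<lparr>Obj = Ob, Arr = {e a b |a b. a\<in>Ob \<and> b\<in>Ob \<and> R a b}, Src = s, Tgt = t,
     Idt = (\<lambda>a. e a a), Cmp = (\<lambda>g h. e (s h) (t g))\<rparr>"

lemma thin_simps: "Obj (thin Ob R e s t) = Ob" "Arr (thin Ob R e s t) = {e a b |a b. a\<in>Ob \<and> b\<in>Ob \<and> R a b}"
  "Src (thin Ob R e s t) = s" "Tgt (thin Ob R e s t) = t" "Idt (thin Ob R e s t) = (\<lambda>a. e a a)"
  "Cmp (thin Ob R e s t) = (\<lambda>g h. e (s h) (t g))"
  unfolding thin_def by simp_all

locale thinloc =
  fixes Ob :: "'o set" and R and e :: "'o\<Rightarrow>'o\<Rightarrow>'m" and s t
  assumes refl: "\<And>a. a\<in>Ob \<Longrightarrow> R a a"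
    and trans: "\<And>a b c. a\<in>Ob \<Longrightarrow> b\<in>Ob \<Longrightarrow> c\<in>Ob \<Longrightarrow> R a b \<Longrightarrow> R b c \<Longrightarrow> R a c"
    and antisym: "\<And>a b. a\<in>Ob \<Longrightarrow> b\<in>Ob \<Longrightarrow> R a b \<Longrightarrow> R b a \<Longrightarrow> a = b"
    and se: "\<And>a b. a\<in>Ob \<Longrightarrow> b\<in>Ob \<Longrightarrow> s (e a b) = a"
    and te: "\<And>a b. a\<in>Ob \<Longrightarrow> b\<in>Ob \<Longrightarrow> t (e a b) = b"
begin

abbreviation "T \<equiv> thin Ob R e s t"

lemma arrE: assumes "m \<in> Arr T" obtains a b where "a\<in>Ob" "b\<in>Ob" "R a b" "m = e a b"
  using assms by (auto simp: thin_simps)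

lemma arrI: "a\<in>Ob \<Longrightarrow> b\<in>Ob \<Longrightarrow> R a b \<Longrightarrow> e a b \<in> Arr T"
  by (auto simp: thin_simps)

lemma e_inj: assumes "a\<in>Ob" "b\<in>Ob" "a'\<in>Ob" "b'\<in>Ob" "e a b = e a' b'" shows "a = a' \<and> b = b'"
proof -
  have "s (e a b) = s (e a' b')" "t (e a b) = t (e a' b')" using assms(5) by simp_all
  thus ?thesis using se te assms(1-4) by simp
qed

lemma cat: "category T"
  unfolding category_def
proof (intro conjI)
  show "\<forall>f\<in>Arr T. Src T f \<in> Obj T \<and> Tgt T f \<in> Obj T"
    by (auto simp: thin_simps se te)
  show "\<forall>a\<in>Obj T. Idt T a \<in> Arr T \<and> Src T (Idt T a) = a \<and> Tgt T (Idt T a) = a"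
    using refl by (auto simp: thin_simps se te)
  show "\<forall>f\<in>Arr T. \<forall>g\<in>Arr T. Tgt T f = Src T g \<longrightarrow>
        Cmp T g f \<in> Arr T \<and> Src T (Cmp T g f) = Src T f \<and> Tgt T (Cmp T g f) = Tgt T g"
  proof (intro ballI impI)
    fix f g assume f: "f \<in> Arr T" and g: "g \<in> Arr T" and eq: "Tgt T f = Src T g"
    from f obtain a b where ab: "a\<in>Ob" "b\<in>Ob" "R a b" "f = e a b" by (rule arrE)
    from g obtain c d where cd: "c\<in>Ob" "d\<in>Ob" "R c d" "g = e c d" by (rule arrE)
    from eq ab cd have "b = c" by (simp add: thin_simps se te)
    with ab cd trans[of a b d] show "Cmp T g f \<in> Arr T \<and> Src T (Cmp T g f) = Src T f \<and> Tgt T (Cmp T g f) = Tgt T g"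
      by (auto simp: thin_simps se te)
  qed
  show "\<forall>f\<in>Arr T. Cmp T (Idt T (Tgt T f)) f = f \<and> Cmp T f (Idt T (Src T f)) = f"
    by (auto simp: thin_simps se te)
  show "\<forall>f\<in>Arr T. \<forall>g\<in>Arr T. \<forall>h\<in>Arr T. Tgt T f = Src T g \<and> Tgt T g = Src T h \<longrightarrow>
        Cmp T h (Cmp T g f) = Cmp T (Cmp T h g) f"
    by (auto simp: thin_simps se te)
qed

lemma poset: "is_poset T"
  unfolding is_poset_def
proof (intro conjI cat ballI impI)
  fix f f' assume "f \<in> Arr T" "f' \<in> Arr T" "Src T f = Src T f' \<and> Tgt T f = Tgt T f'"
  thus "f = f'" by (auto simp: thin_simps se te)
next
  fix f g assume "f \<in> Arr T" "g \<in> Arr T" "Src T f = Tgt T g \<and> Tgt T f = Src T g"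
  thus "Src T f = Tgt T f" using antisym by (auto simp: thin_simps se te)
qed

lemma le_iff: "leq T a b \<longleftrightarrow> a\<in>Ob \<and> b\<in>Ob \<and> R a b"
proof
  assume "leq T a b"
  then obtain m where "m \<in> Arr T" "s m = a" "t m = b" unfolding leq_def by (auto simp: thin_simps)
  thus "a\<in>Ob \<and> b\<in>Ob \<and> R a b" by (auto simp: thin_simps se te)
next
  assume "a\<in>Ob \<and> b\<in>Ob \<and> R a b"
  thus "leq T a b" unfolding leq_def apply (intro bexI[of _ "e a b"]) using arrI[of a b] by (auto simp: thin_simps se te)
qed

lemma ar_thin: "a\<in>Ob \<Longrightarrow> b\<in>Ob \<Longrightarrow> R a b \<Longrightarrow> ar T a b = e a b"
  using ar_unique[OF poset, of "e a b" a b] arrI se te by (simp add: thin_simps)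

end

lemma thin_functor:
  assumes "category C" "thinloc Ob R e s t"
    and "\<And>a. a \<in> Obj C \<Longrightarrow> F a \<in> Ob"
    and "\<And>\<phi>. \<phi> \<in> Arr C \<Longrightarrow> R (F (Src C \<phi>)) (F (Tgt C \<phi>))"
  shows "is_functor C (thin Ob R e s t) (F, \<lambda>\<phi>. e (F (Src C \<phi>)) (F (Tgt C \<phi>)))"
proof -
  interpret thinloc Ob R e s t by fact
  let ?G = "(F, \<lambda>\<phi>. e (F (Src C \<phi>)) (F (Tgt C \<phi>)))"
  have A: "\<And>\<phi>. \<phi> \<in> Arr C \<Longrightarrow> snd ?G \<phi> \<in> Arr T \<and> Src T (snd ?G \<phi>) = fst ?G (Src C \<phi>) \<and> Tgt T (snd ?G \<phi>) = fst ?G (Tgt C \<phi>)"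
  proof -
    fix \<phi> assume p: "\<phi> \<in> Arr C"
    have "F (Src C \<phi>) \<in> Ob" "F (Tgt C \<phi>) \<in> Ob" using p catD(1,2)[OF assms(1)] assms(3) by auto
    thus "snd ?G \<phi> \<in> Arr T \<and> Src T (snd ?G \<phi>) = fst ?G (Src C \<phi>) \<and> Tgt T (snd ?G \<phi>) = fst ?G (Tgt C \<phi>)"
      using assms(4)[OF p] arrI by (simp add: thin_simps se te)
  qed
  have B: "\<And>a. a \<in> Obj C \<Longrightarrow> fst ?G a \<in> Obj T" using assms(3) by (simp add: thin_simps)
  have C: "\<And>a. a \<in> Obj C \<Longrightarrow> snd ?G (Idt C a) = Idt T (fst ?G a)"
    using catD(4,5)[OF assms(1)] by (simp add: thin_simps)
  have D: "\<And>f g. f \<in> Arr C \<Longrightarrow> g \<in> Arr C \<Longrightarrow> Tgt C f = Src C g \<Longrightarrow> snd ?G (Cmp C g f) = Cmp T (snd ?G g) (snd ?G f)"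
  proof -
    fix f g assume fg: "f \<in> Arr C" "g \<in> Arr C" "Tgt C f = Src C g"
    have o: "F (Src C f) \<in> Ob" "F (Tgt C f) \<in> Ob" "F (Tgt C g) \<in> Ob" using fg catD(1,2)[OF assms(1)] assms(3) by auto
    show "snd ?G (Cmp C g f) = Cmp T (snd ?G g) (snd ?G f)"
      using catD(7,8)[OF assms(1) fg] fg(3) o by (simp add: thin_simps se te)
  qed
  show ?thesis unfolding is_functor_def using A B C D by blast
qed


lemma upd_simps: "Obj (C\<lparr>Obj := A, Arr := B\<rparr>) = A" "Arr (C\<lparr>Obj := A, Arr := B\<rparr>) = B"
  "Src (C\<lparr>Obj := A, Arr := B\<rparr>) = Src C" "Tgt (C\<lparr>Obj := A, Arr := B\<rparr>) = Tgt C"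
  "Idt (C\<lparr>Obj := A, Arr := B\<rparr>) = Idt C" "Cmp (C\<lparr>Obj := A, Arr := B\<rparr>) = Cmp C"
  by simp_all

lemma upd_category:
  assumes C: "category C" and sub: "Ob' \<subseteq> Obj C" "M \<subseteq> Arr C"
    and st: "\<And>f. f \<in> M \<Longrightarrow> Src C f \<in> Ob' \<and> Tgt C f \<in> Ob'"
    and id: "\<And>a. a \<in> Ob' \<Longrightarrow> Idt C a \<in> M"
    and cm: "\<And>f g. f \<in> M \<Longrightarrow> g \<in> M \<Longrightarrow> Tgt C f = Src C g \<Longrightarrow> Cmp C g f \<in> M"
  shows "category (C\<lparr>Obj := Ob', Arr := M\<rparr>)"
  unfolding category_def
proof (simp only: upd_simps, intro conjI ballI impI)
  fix f assume "f \<in> M" thus "Src C f \<in> Ob'" "Tgt C f \<in> Ob'" using st by blast+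
next
  fix a assume a: "a \<in> Ob'"
  thus "Idt C a \<in> M" using id by blast
  have a': "a \<in> Obj C" using a sub(1) by blast
  show "Src C (Idt C a) = a" "Tgt C (Idt C a) = a" using catD(4,5)[OF C a'] by simp_all
next
  fix f g assume fg: "f \<in> M" "g \<in> M" "Tgt C f = Src C g"
  have f': "f \<in> Arr C" "g \<in> Arr C" using fg sub(2) by blast+
  show "Cmp C g f \<in> M" using cm[OF fg] .
  show "Src C (Cmp C g f) = Src C f" "Tgt C (Cmp C g f) = Tgt C g"
    using catD(7,8)[OF C f' fg(3)] by simp_all
next
  fix f assume "f \<in> M" hence f': "f \<in> Arr C" using sub(2) by blast
  show "Cmp C (Idt C (Tgt C f)) f = f" "Cmp C f (Idt C (Src C f)) = f"
    using catD(9,10)[OF C f'] by simp_all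
next
  fix f g h assume "f \<in> M" "g \<in> M" "h \<in> M" and eq: "Tgt C f = Src C g \<and> Tgt C g = Src C h"
  hence f': "f \<in> Arr C" "g \<in> Arr C" "h \<in> Arr C" using sub(2) by blast+
  show "Cmp C h (Cmp C g f) = Cmp C (Cmp C h g) f" using catD(11)[OF C f'] eq by simp
qed

lemma upd_poset:
  assumes "is_poset C" and "category (C\<lparr>Obj := Ob', Arr := M\<rparr>)" "M \<subseteq> Arr C"
  shows "is_poset (C\<lparr>Obj := Ob', Arr := M\<rparr>)"
  unfolding is_poset_def
proof (simp only: upd_simps, intro conjI assms(2) ballI impI)
  fix f f' assume "f \<in> M" "f' \<in> M" "Src C f = Src C f' \<and> Tgt C f = Tgt C f'"
  thus "f = f'" using posetD(2)[OF assms(1)] assms(3) by blast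
next
  fix f g assume "f \<in> M" "g \<in> M" "Src C f = Tgt C g \<and> Tgt C f = Src C g"
  thus "Src C f = Tgt C f" using posetD(3)[OF assms(1)] assms(3) by blast
qed

lemma fixcat_simps:
  "Obj (fixcat C act H) = {a\<in>Obj C. \<forall>h\<in>H. fst (act h) a = a}"
  "Arr (fixcat C act H) = {f\<in>Arr C. \<forall>h\<in>H. snd (act h) f = f}"
  "Src (fixcat C act H) = Src C" "Tgt (fixcat C act H) = Tgt C"
  "Idt (fixcat C act H) = Idt C" "Cmp (fixcat C act H) = Cmp C"
  unfolding fixcat_def by simp_all

lemma fix_category:
  assumes C: "category C" and F: "\<And>h. h \<in> H \<Longrightarrow> is_functor C C (act h)"
  shows "category (fixcat C act H)"
  unfolding fixcat_def
proof (rule upd_category[OF C])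
  fix f assume "f \<in> {f\<in>Arr C. \<forall>h\<in>H. snd (act h) f = f}"
  hence f: "f \<in> Arr C" "\<And>h. h\<in>H \<Longrightarrow> snd (act h) f = f" by blast+
  have "\<And>h. h\<in>H \<Longrightarrow> fst (act h) (Src C f) = Src C f \<and> fst (act h) (Tgt C f) = Tgt C f"
  proof -
    fix h assume h: "h \<in> H"
    have e: "snd (act h) f = f" using f(2)[OF h] .
    have "Src C (snd (act h) f) = fst (act h) (Src C f)" "Tgt C (snd (act h) f) = fst (act h) (Tgt C f)"
      using funD(3,4)[OF F[OF h] f(1)] by simp_all
    thus "fst (act h) (Src C f) = Src C f \<and> fst (act h) (Tgt C f) = Tgt C f"
      unfolding e by metis
  qed
  thus "Src C f \<in> {a\<in>Obj C. \<forall>h\<in>H. fst (act h) a = a} \<and> Tgt C f \<in> {a\<in>Obj C. \<forall>h\<in>H. fst (act h) a = a}"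
    using catD(1,2)[OF C f(1)] by blast
next
  fix a assume a: "a \<in> {a\<in>Obj C. \<forall>h\<in>H. fst (act h) a = a}"
  have "\<And>h. h\<in>H \<Longrightarrow> snd (act h) (Idt C a) = Idt C a"
  proof -
    fix h assume h: "h \<in> H"
    have "snd (act h) (Idt C a) = Idt C (fst (act h) a)" using funD(5)[OF F[OF h]] a by blast
    also have "fst (act h) a = a" using a h by blast
    finally show "snd (act h) (Idt C a) = Idt C a" .
  qed
  thus "Idt C a \<in> {f\<in>Arr C. \<forall>h\<in>H. snd (act h) f = f}"
    using catD(3)[OF C] a by blast
next
  fix f g assume fg: "f \<in> {f\<in>Arr C. \<forall>h\<in>H. snd (act h) f = f}" "g \<in> {f\<in>Arr C. \<forall>h\<in>H. snd (act h) f = f}"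
    "Tgt C f = Src C g"
  have "\<And>h. h\<in>H \<Longrightarrow> snd (act h) (Cmp C g f) = Cmp C g f"
  proof -
    fix h assume h: "h \<in> H"
    have "snd (act h) (Cmp C g f) = Cmp C (snd (act h) g) (snd (act h) f)" using funD(6)[OF F[OF h]] fg by blast
    also have "snd (act h) g = g" using fg h by blast
    also have "snd (act h) f = f" using fg h by blast
    finally show "snd (act h) (Cmp C g f) = Cmp C g f" .
  qed
  thus "Cmp C g f \<in> {f\<in>Arr C. \<forall>h\<in>H. snd (act h) f = f}"
    using catD(6)[OF C] fg by blast
next
  show "{a \<in> Obj C. \<forall>h\<in>H. fst (act h) a = a} \<subseteq> Obj C" by blast
next
  show "{f \<in> Arr C. \<forall>h\<in>H. snd (act h) f = f} \<subseteq> Arr C" by blast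
qed

lemma fix_poset:
  assumes C: "is_poset C" and F: "\<And>h. h \<in> H \<Longrightarrow> is_functor C C (act h)"
  shows "is_poset (fixcat C act H)"
proof -
  have c: "category C" by (rule posetD(1)[OF C])
  have "category (fixcat C act H)" by (rule fix_category[of C H act, OF c F])
  moreover have "{f\<in>Arr C. \<forall>h\<in>H. snd (act h) f = f} \<subseteq> Arr C" by blast
  ultimately show ?thesis unfolding fixcat_def by (rule upd_poset[OF C])
qed

lemma fix_functor:
  assumes F: "is_functor C D F" and eq: "\<And>h. h \<in> H \<Longrightarrow> ftr_eq C (fcomp F (a h)) (fcomp (b h) F)"
    and A: "\<And>h. h \<in> H \<Longrightarrow> is_functor C C (a h)"
  shows "is_functor (fixcat C a H) (fixcat D b H) F"
  unfolding is_functor_def fixcat_simps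
proof (intro conjI ballI)
  fix x assume x: "x \<in> {x\<in>Obj C. \<forall>h\<in>H. fst (a h) x = x}"
  have "\<And>h. h\<in>H \<Longrightarrow> fst (b h) (fst F x) = fst F x"
  proof -
    fix h assume h: "h\<in>H"
    have "fst F (fst (a h) x) = fst (b h) (fst F x)" using eq[OF h] x unfolding ftr_eq_def fcomp_def by auto
    thus "fst (b h) (fst F x) = fst F x" using x h by auto
  qed
  thus "fst F x \<in> {a\<in>Obj D. \<forall>h\<in>H. fst (b h) a = a}" using funD(1)[OF F] x by auto
  show "snd F (Idt C x) = Idt D (fst F x)" using funD(5)[OF F] x by auto
next
  fix \<phi> assume x: "\<phi> \<in> {f\<in>Arr C. \<forall>h\<in>H. snd (a h) f = f}"
  have "\<And>h. h\<in>H \<Longrightarrow> snd (b h) (snd F \<phi>) = snd F \<phi>"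
  proof -
    fix h assume h: "h\<in>H"
    have "snd F (snd (a h) \<phi>) = snd (b h) (snd F \<phi>)" using eq[OF h] x unfolding ftr_eq_def fcomp_def by auto
    thus "snd (b h) (snd F \<phi>) = snd F \<phi>" using x h by auto
  qed
  thus "snd F \<phi> \<in> {f\<in>Arr D. \<forall>h\<in>H. snd (b h) f = f}" using funD(2)[OF F] x by auto
  show "Src D (snd F \<phi>) = fst F (Src C \<phi>)" "Tgt D (snd F \<phi>) = fst F (Tgt C \<phi>)" using funD(3,4)[OF F] x by auto
next
  fix f g assume "f \<in> {f\<in>Arr C. \<forall>h\<in>H. snd (a h) f = f}" "g \<in> {f\<in>Arr C. \<forall>h\<in>H. snd (a h) f = f}"
  hence "f \<in> Arr C" "g \<in> Arr C" by blast+
  thus "Tgt C f = Src C g \<longrightarrow> snd F (Cmp C g f) = Cmp D (snd F g) (snd F f)" using funD(6)[OF F, of f g] by blast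
qed

lemma fix_leq:
  assumes C: "is_poset C" and F: "\<And>h. h \<in> H \<Longrightarrow> is_functor C C (act h)"
    and x: "x \<in> Obj (fixcat C act H)" and y: "y \<in> Obj (fixcat C act H)"
  shows "leq (fixcat C act H) x y \<longleftrightarrow> leq C x y"
proof
  assume "leq (fixcat C act H) x y"
  then obtain \<phi> where "\<phi> \<in> Arr (fixcat C act H)" "Src C \<phi> = x" "Tgt C \<phi> = y" unfolding leq_def fixcat_simps(3,4) by blast
  thus "leq C x y" unfolding leq_def fixcat_simps by blast
next
  assume l: "leq C x y"
  note A = ar_prop[OF C l]
  have "\<And>h. h\<in>H \<Longrightarrow> snd (act h) (ar C x y) = ar C x y"
  proof -
    fix h assume h: "h \<in> H"
    show "snd (act h) (ar C x y) = ar C x y"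
      apply (rule posetD(2)[OF C])
      using funD(2,3,4)[OF F[OF h] A(1)] A x y h by (simp_all add: fixcat_simps)
  qed
  hence "ar C x y \<in> Arr (fixcat C act H)" using A(1) by (simp add: fixcat_simps)
  thus "leq (fixcat C act H) x y" unfolding leq_def fixcat_simps(3,4) using A(2,3) by blast
qed

lemma fix_ar:
  assumes C: "is_poset C" and F: "\<And>h. h \<in> H \<Longrightarrow> is_functor C C (act h)"
    and x: "x \<in> Obj (fixcat C act H)" and y: "y \<in> Obj (fixcat C act H)" and l: "leq C x y"
  shows "ar (fixcat C act H) x y = ar C x y"
proof -
  have l': "leq (fixcat C act H) x y" using fix_leq[OF C F x y] l by simp
  note A = ar_prop[OF fix_poset[OF C F] l']
  have "ar (fixcat C act H) x y \<in> Arr C" using A(1) by (simp add: fixcat_simps)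
  from ar_unique[OF C this] A(2,3) show ?thesis by (simp add: fixcat_simps)
qed

lemma gcatD:
  assumes "gcat G C act"
  shows "category C" "\<And>g. g \<in> carrier G \<Longrightarrow> is_functor C C (act g)"
    "ftr_eq C (act \<one>\<^bsub>G\<^esub>) idF"
    "\<And>g h. g\<in>carrier G \<Longrightarrow> h\<in>carrier G \<Longrightarrow> ftr_eq C (act (g \<otimes>\<^bsub>G\<^esub> h)) (fcomp (act g) (act h))"
  using assms unfolding gcat_def by auto

lemma gfunD:
  assumes "gfunctor G C a D b F"
  shows "is_functor C D F" "\<And>g x. g \<in> carrier G \<Longrightarrow> x \<in> Obj C \<Longrightarrow> fst F (fst (a g) x) = fst (b g) (fst F x)"
    "\<And>g \<phi>. g \<in> carrier G \<Longrightarrow> \<phi> \<in> Arr C \<Longrightarrow> snd F (snd (a g) \<phi>) = snd (b g) (snd F \<phi>)"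
  using assms unfolding gfunctor_def ftr_eq_def fcomp_def by auto

lemma ftr_eqD: "ftr_eq C F F' \<Longrightarrow> x \<in> Obj C \<Longrightarrow> fst F x = fst F' x"
  "ftr_eq C F F' \<Longrightarrow> \<phi> \<in> Arr C \<Longrightarrow> snd F \<phi> = snd F' \<phi>"
  unfolding ftr_eq_def by auto

lemma fix_functor_g:
  assumes "gfunctor G C a D b F" "H \<subseteq> carrier G" "\<And>h. h \<in> carrier G \<Longrightarrow> is_functor C C (a h)"
  shows "is_functor (fixcat C a H) (fixcat D b H) F"
  apply (rule fix_functor[OF gfunD(1)[OF assms(1)]])
  using assms unfolding gfunctor_def by auto


definition cz :: "('lo,'lm) cat \<Rightarrow> ('xo,'xm) cat \<Rightarrow> ('lo+'xo) set \<Rightarrow> 'lm+'xm" where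
  "cz L X a = (case the_elem a of Inl l \<Rightarrow> Inl (Idt L l) | Inr x \<Rightarrow> Inr (Idt X x))"
definition dz :: "('lo,'lm) cat \<Rightarrow> ('xo,'xm) cat \<Rightarrow> 'lm+'xm \<Rightarrow> ('lo+'xo) set" where
  "dz L X i = (case i of Inl u \<Rightarrow> {Inl (Src L u)} | Inr u \<Rightarrow> {Inr (Src X u)})"
definition penc :: "('lo,'lm) cat \<Rightarrow> ('xo,'xm) cat \<Rightarrow> ('lo+'xo) set \<Rightarrow> ('lo+'xo) set \<Rightarrow> ('lm+'xm) list set" where
  "penc L X a b = {[cz L X a, cz L X b]}"
definition psrc :: "('lo,'lm) cat \<Rightarrow> ('xo,'xm) cat \<Rightarrow> ('lm+'xm) list set \<Rightarrow> ('lo+'xo) set" where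
  "psrc L X m = dz L X (hd (the_elem m))"
definition ptgt :: "('lo,'lm) cat \<Rightarrow> ('xo,'xm) cat \<Rightarrow> ('lm+'xm) list set \<Rightarrow> ('lo+'xo) set" where
  "ptgt L X m = dz L X (last (the_elem m))"

definition POb :: "('ko,'km) cat \<Rightarrow> ('lo,'lm) cat \<Rightarrow> ('xo,'xm) cat \<Rightarrow> ('ko,'km,'lo,'lm) ftr \<Rightarrow> ('lo+'xo) set set" where
  "POb K L X j = (\<lambda>z. {z}) ` (Inl ` (Obj L - fst j ` Obj K) \<union> Inr ` Obj X)"

definition Rs :: "('ko,'km) cat \<Rightarrow> ('lo,'lm) cat \<Rightarrow> ('xo,'xm) cat \<Rightarrow> ('ko,'km,'xo,'xm) ftr \<Rightarrow> ('ko,'km,'lo,'lm) ftr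
   \<Rightarrow> 'lo+'xo \<Rightarrow> 'lo+'xo \<Rightarrow> bool" where
  "Rs K L X f j z w = (case z of
      Inr x \<Rightarrow> (case w of Inr x' \<Rightarrow> leq X x x' | Inl l \<Rightarrow> (\<exists>k\<in>Obj K. leq X x (fst f k) \<and> leq L (fst j k) l))
    | Inl l \<Rightarrow> (case w of Inl l' \<Rightarrow> leq L l l' | Inr _ \<Rightarrow> False))"

definition PR where "PR K L X f j a b = Rs K L X f j (the_elem a) (the_elem b)"

definition PC :: "('ko,'km) cat \<Rightarrow> ('lo,'lm) cat \<Rightarrow> ('xo,'xm) cat \<Rightarrow> ('ko,'km,'xo,'xm) ftr \<Rightarrow> ('ko,'km,'lo,'lm) ftr
   \<Rightarrow> (('lo+'xo) set, ('lm+'xm) list set) cat" where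
  "PC K L X f j = thin (POb K L X j) (PR K L X f j) (penc L X) (psrc L X) (ptgt L X)"

definition UP :: "('lo,'lm) cat \<Rightarrow> ('xo,'xm) cat \<Rightarrow> ('xo,'xm,('lo+'xo) set, ('lm+'xm) list set) ftr" where
  "UP L X = ((\<lambda>x. {Inr x}), (\<lambda>\<phi>. penc L X {Inr (Src X \<phi>)} {Inr (Tgt X \<phi>)}))"

definition vo :: "('ko,'km) cat \<Rightarrow> ('ko,'km,'xo,'xm) ftr \<Rightarrow> ('ko,'km,'lo,'lm) ftr \<Rightarrow> 'lo \<Rightarrow> ('lo+'xo) set" where
  "vo K f j l = (if l \<in> fst j ` Obj K then {Inr (fst f (the_inv_into (Obj K) (fst j) l))} else {Inl l})"

definition VP where
  "VP K L X f j = (vo K f j, (\<lambda>\<phi>. penc L X (vo K f j (Src L \<phi>)) (vo K f j (Tgt L \<phi>))))"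

lemma cz_simps: "cz L X {Inl l} = Inl (Idt L l)" "cz L X {Inr x} = Inr (Idt X x)"
  unfolding cz_def by simp_all

lemma Rs_simps: "Rs K L X f j (Inr x) (Inr x') = leq X x x'"
  "Rs K L X f j (Inr x) (Inl l) = (\<exists>k\<in>Obj K. leq X x (fst f k) \<and> leq L (fst j k) l)"
  "Rs K L X f j (Inl l) (Inl l') = leq L l l'"
  "Rs K L X f j (Inl l) (Inr x) = False"
  unfolding Rs_def by simp_all

lemma PR_simps: "PR K L X f j {Inr x} {Inr x'} = leq X x x'"
  "PR K L X f j {Inr x} {Inl l} = (\<exists>k\<in>Obj K. leq X x (fst f k) \<and> leq L (fst j k) l)"
  "PR K L X f j {Inl l} {Inl l'} = leq L l l'"
  "PR K L X f j {Inl l} {Inr x} = False"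
  unfolding PR_def by (simp_all add: Rs_simps)

lemma POb_iff: "a \<in> POb K L X j \<longleftrightarrow> (\<exists>l. a = {Inl l} \<and> l \<in> Obj L \<and> l \<notin> fst j ` Obj K) \<or> (\<exists>x. a = {Inr x} \<and> x \<in> Obj X)"
  unfolding POb_def by blast

lemma POb_E:
  assumes "a \<in> POb K L X j"
  obtains (inl) l where "a = {Inl l}" "l \<in> Obj L" "l \<notin> fst j ` Obj K"
    | (inr) x where "a = {Inr x}" "x \<in> Obj X"
  using assms unfolding POb_iff by blast

lemma POb_I: "l \<in> Obj L \<Longrightarrow> l \<notin> fst j ` Obj K \<Longrightarrow> {Inl l} \<in> POb K L X j"
  "x \<in> Obj X \<Longrightarrow> {Inr x} \<in> POb K L X j"
  unfolding POb_iff by blast+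

locale pcore =
  fixes K :: "('ko,'km) cat" and L :: "('lo,'lm) cat" and X :: "('xo,'xm) cat"
    and f :: "('ko,'km,'xo,'xm) ftr" and j :: "('ko,'km,'lo,'lm) ftr" and \<rho> :: "'lo \<Rightarrow> 'ko"
  assumes posK: "is_poset K" and posL: "is_poset L" and posX: "is_poset X"
    and funf: "is_functor K X f" and funj: "is_functor K L j"
    and injj: "inj_on (fst j) (Obj K)"
    and sieve: "\<And>\<phi>. \<phi> \<in> Arr L \<Longrightarrow> Tgt L \<phi> \<in> fst j ` Obj K \<Longrightarrow> Src L \<phi> \<in> fst j ` Obj K"
    and rho: "\<And>l k. l \<in> Obj L \<Longrightarrow> k \<in> Obj K \<Longrightarrow> leq L (fst j k) l \<Longrightarrow>
                 \<rho> l \<in> Obj K \<and> leq L (fst j (\<rho> l)) l \<and> leq K k (\<rho> l)"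
begin

abbreviation "P \<equiv> PC K L X f j"
abbreviation "Ob \<equiv> POb K L X j"
abbreviation "R \<equiv> PR K L X f j"

lemmas catK = posetD(1)[OF posK] and catL = posetD(1)[OF posL] and catX = posetD(1)[OF posX]

lemma jobj: "k \<in> Obj K \<Longrightarrow> fst j k \<in> Obj L" using funD(1)[OF funj] by blast
lemma fobj: "k \<in> Obj K \<Longrightarrow> fst f k \<in> Obj X" using funD(1)[OF funf] by blast

lemma jinv: "k \<in> Obj K \<Longrightarrow> the_inv_into (Obj K) (fst j) (fst j k) = k"
  by (rule the_inv_into_f_f[OF injj])

lemma dzcz: "l \<in> Obj L \<Longrightarrow> dz L X (cz L X {Inl l}) = {Inl l}"
  "x \<in> Obj X \<Longrightarrow> dz L X (cz L X {Inr x}) = {Inr x}"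
  unfolding cz_simps dz_def using catD(4)[OF catL] catD(4)[OF catX] by simp_all

lemma dzcz_ob: "a \<in> Ob \<Longrightarrow> dz L X (cz L X a) = a"
  by (erule POb_E) (simp_all add: dzcz)

lemma se: "a \<in> Ob \<Longrightarrow> psrc L X (penc L X a b) = a"
  unfolding psrc_def penc_def by (simp add: dzcz_ob)
lemma te: "b \<in> Ob \<Longrightarrow> ptgt L X (penc L X a b) = b"
  unfolding ptgt_def penc_def by (simp add: dzcz_ob)

lemma leqL_obj: "leq L a b \<Longrightarrow> a \<in> Obj L \<and> b \<in> Obj L" by (rule le_obj[OF posL])
lemma leqX_obj: "leq X a b \<Longrightarrow> a \<in> Obj X \<and> b \<in> Obj X" by (rule le_obj[OF posX])
lemma leqK_obj: "leq K a b \<Longrightarrow> a \<in> Obj K \<and> b \<in> Obj K" by (rule le_obj[OF posK])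

lemma mixed:
  assumes x: "x \<in> Obj X" and l: "l \<in> Obj L" and r: "R {Inr x} {Inl l}"
  shows "\<rho> l \<in> Obj K" "leq L (fst j (\<rho> l)) l" "leq X x (fst f (\<rho> l))"
proof -
  obtain k where k: "k \<in> Obj K" "leq X x (fst f k)" "leq L (fst j k) l" using r unfolding PR_simps by blast
  note r1 = rho[OF l k(1) k(3)]
  show "\<rho> l \<in> Obj K" "leq L (fst j (\<rho> l)) l" using r1 by simp_all
  have "leq X (fst f k) (fst f (\<rho> l))" using fun_le2[OF posK funf] r1 by blast
  thus "leq X x (fst f (\<rho> l))" using le_trans[OF posX k(2)] by blast
qed

lemma reflect:
  assumes k: "k \<in> Obj K" "k' \<in> Obj K" and le: "leq L (fst j k) (fst j k')"
  shows "leq K k k'"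
proof -
  have jk': "fst j k' \<in> Obj L" using jobj k(2) .
  note r1 = rho[OF jk' k(1) le]
  note r2 = rho[OF jk' k(2) le_refl[OF posL jk']]
  have "leq L (fst j k') (fst j (\<rho> (fst j k')))" using fun_le2[OF posK funj] r2 by blast
  hence "fst j k' = fst j (\<rho> (fst j k'))" using le_antisym[OF posL] r2 by blast
  hence "k' = \<rho> (fst j k')" using injj k(2) r2 unfolding inj_on_def by blast
  thus ?thesis using r1 by simp
qed

lemma thin: "thinloc Ob R (penc L X) (psrc L X) (ptgt L X)"
proof
  fix a assume "a \<in> Ob"
  thus "R a a"
  proof (cases rule: POb_E)
    case (inl l) thus ?thesis using le_refl[OF posL] by (simp add: PR_simps)
  next
    case (inr x) thus ?thesis using le_refl[OF posX] by (simp add: PR_simps)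
  qed
next
  fix a b c assume a: "a \<in> Ob" and b: "b \<in> Ob" and c: "c \<in> Ob" and ab: "R a b" and bc: "R b c"
  show "R a c"
  using a proof (cases rule: POb_E)
    case L: (inl l)
    then obtain l' where l': "b = {Inl l'}" using ab b by (cases rule: POb_E[OF b]) (auto simp: PR_simps)
    then obtain l'' where l'': "c = {Inl l''}" using bc c by (cases rule: POb_E[OF c]) (auto simp: PR_simps)
    show ?thesis using ab bc L l' l'' le_trans[OF posL] by (simp add: PR_simps)
  next
    case X: (inr x)
    show ?thesis
    using b proof (cases rule: POb_E)
      case L: (inl l)
      then obtain l'' where l'': "c = {Inl l''}" using bc c by (cases rule: POb_E[OF c]) (auto simp: PR_simps)
      from ab X L obtain k where k: "k \<in> Obj K" "leq X x (fst f k)" "leq L (fst j k) l" by (auto simp: PR_simps)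
      have "leq L l l''" using bc L l'' by (simp add: PR_simps)
      hence "leq L (fst j k) l''" using le_trans[OF posL k(3)] by blast
      thus ?thesis using X l'' k by (auto simp: PR_simps)
    next
      case X2: (inr x')
      have xx': "leq X x x'" using ab X X2 by (simp add: PR_simps)
      show ?thesis
      using c proof (cases rule: POb_E)
        case L: (inl l)
        from bc X2 L obtain k where k: "k \<in> Obj K" "leq X x' (fst f k)" "leq L (fst j k) l" by (auto simp: PR_simps)
        have "leq X x (fst f k)" using le_trans[OF posX xx' k(2)] .
        thus ?thesis using X L k by (auto simp: PR_simps)
      next
        case X3: (inr x'')
        have "leq X x' x''" using bc X2 X3 by (simp add: PR_simps)
        thus ?thesis using X X3 le_trans[OF posX xx'] by (simp add: PR_simps)
      qed
    qed
  qed
next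
  fix a b assume a: "a \<in> Ob" and b: "b \<in> Ob" and ab: "R a b" and ba: "R b a"
  show "a = b"
  using a proof (cases rule: POb_E)
    case L: (inl l)
    then obtain l' where l': "b = {Inl l'}" using ab b by (cases rule: POb_E[OF b]) (auto simp: PR_simps)
    show ?thesis using ab ba L l' le_antisym[OF posL] by (simp add: PR_simps)
  next
    case X: (inr x)
    then obtain x' where x': "b = {Inr x'}" using ba b by (cases rule: POb_E[OF b]) (auto simp: PR_simps)
    show ?thesis using ab ba X x' le_antisym[OF posX] by (simp add: PR_simps)
  qed
next
  fix a b assume "a \<in> Ob" "b \<in> Ob" thus "psrc L X (penc L X a b) = a" using se by blast
next
  fix a b assume "a \<in> Ob" "b \<in> Ob" thus "ptgt L X (penc L X a b) = b" using te by blast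
qed

interpretation T: thinloc Ob R "penc L X" "psrc L X" "ptgt L X" by (rule thin)

lemma posP: "is_poset P" unfolding PC_def by (rule T.poset)
lemma catP: "category P" by (rule posetD(1)[OF posP])

lemma P_simps: "Obj P = Ob" "Arr P = {penc L X a b |a b. a\<in>Ob \<and> b\<in>Ob \<and> R a b}"
  "Src P = psrc L X" "Tgt P = ptgt L X" "Idt P = (\<lambda>a. penc L X a a)"
  "Cmp P = (\<lambda>g h. penc L X (psrc L X h) (ptgt L X g))"
  unfolding PC_def thin_simps by simp_all

lemma arrP_E: assumes "m \<in> Arr P" obtains a b where "a\<in>Ob" "b\<in>Ob" "R a b" "m = penc L X a b"
  using assms unfolding P_simps by blast

lemma arrP_I: "a\<in>Ob \<Longrightarrow> b\<in>Ob \<Longrightarrow> R a b \<Longrightarrow> penc L X a b \<in> Arr P"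
  unfolding P_simps by blast

lemma vo_j: "k \<in> Obj K \<Longrightarrow> vo K f j (fst j k) = {Inr (fst f k)}"
  unfolding vo_def using jinv by auto
lemma vo_n: "l \<notin> fst j ` Obj K \<Longrightarrow> vo K f j l = {Inl l}"
  unfolding vo_def by auto

lemma vo_ob: "l \<in> Obj L \<Longrightarrow> vo K f j l \<in> Ob"
proof (cases "l \<in> fst j ` Obj K")
  case True then obtain k where "k \<in> Obj K" "l = fst j k" by blast
  thus ?thesis using vo_j fobj POb_I(2) by metis
next
  case False assume "l \<in> Obj L" thus ?thesis using vo_n[OF False] POb_I(1) False by metis
qed

lemma vo_R: assumes le: "leq L l l'" shows "R (vo K f j l) (vo K f j l')"
proof -
  have l: "l \<in> Obj L" "l' \<in> Obj L" using leqL_obj[OF le] by simp_all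
  show ?thesis
  proof (cases "l' \<in> fst j ` Obj K")
    case True
    then obtain k' where k': "k' \<in> Obj K" "l' = fst j k'" by blast
    obtain \<phi> where \<phi>: "\<phi> \<in> Arr L" "Src L \<phi> = l" "Tgt L \<phi> = l'" using le unfolding leq_def by blast
    have "l \<in> fst j ` Obj K" using sieve[OF \<phi>(1)] \<phi> True by simp
    then obtain k where k: "k \<in> Obj K" "l = fst j k" by blast
    have "leq K k k'" using reflect[OF k(1) k'(1)] le k k' by simp
    hence "leq X (fst f k) (fst f k')" using fun_le2[OF posK funf] by blast
    thus ?thesis using vo_j k k' by (simp add: PR_simps)
  next
    case False
    show ?thesis
    proof (cases "l \<in> fst j ` Obj K")
      case True
      then obtain k where k: "k \<in> Obj K" "l = fst j k" by blast
      have "leq X (fst f k) (fst f k)" using le_refl[OF posX fobj[OF k(1)]] .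
      thus ?thesis using vo_j[OF k(1)] vo_n[OF False] k le by (auto simp: PR_simps)
    next
      case F2: False
      thus ?thesis using vo_n[OF False] vo_n[OF F2] le by (simp add: PR_simps)
    qed
  qed
qed

lemma funU: "is_functor X P (UP L X)"
proof -
  have "is_functor X P ((\<lambda>x. {Inr x}), \<lambda>\<phi>. penc L X ((\<lambda>x. {Inr x}) (Src X \<phi>)) ((\<lambda>x. {Inr x}) (Tgt X \<phi>)))"
    unfolding PC_def
  proof (rule thin_functor[OF catX thin])
    fix a assume "a \<in> Obj X" thus "{Inr a} \<in> Ob" by (rule POb_I(2))
  next
    fix \<phi> assume "\<phi> \<in> Arr X"
    hence "leq X (Src X \<phi>) (Tgt X \<phi>)" unfolding leq_def by blast
    thus "R {Inr (Src X \<phi>)} {Inr (Tgt X \<phi>)}" by (simp add: PR_simps)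
  qed
  thus ?thesis unfolding UP_def by simp
qed

lemma funV: "is_functor L P (VP K L X f j)"
  unfolding VP_def PC_def
proof (rule thin_functor[OF catL thin])
  fix a assume "a \<in> Obj L" thus "vo K f j a \<in> Ob" by (rule vo_ob)
next
  fix \<phi> assume "\<phi> \<in> Arr L"
  hence "leq L (Src L \<phi>) (Tgt L \<phi>)" unfolding leq_def by blast
  thus "R (vo K f j (Src L \<phi>)) (vo K f j (Tgt L \<phi>))" by (rule vo_R)
qed

lemma comm: "ftr_eq K (fcomp (UP L X) f) (fcomp (VP K L X f j) j)"
  unfolding ftr_eq_def
proof (intro conjI ballI)
  fix k assume "k \<in> Obj K"
  thus "fst (fcomp (UP L X) f) k = fst (fcomp (VP K L X f j) j) k"
    unfolding fcomp_def UP_def VP_def by (simp add: vo_j)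
next
  fix \<phi> assume p: "\<phi> \<in> Arr K"
  have o: "Src K \<phi> \<in> Obj K" "Tgt K \<phi> \<in> Obj K" using catD(1,2)[OF catK p] by simp_all
  show "snd (fcomp (UP L X) f) \<phi> = snd (fcomp (VP K L X f j) j) \<phi>"
    unfolding fcomp_def UP_def VP_def using funD(3,4)[OF funf p] funD(3,4)[OF funj p] by (simp add: vo_j o)
qed

end


definition Wm :: "('lo,'lm) cat \<Rightarrow> ('xo,'xm) cat \<Rightarrow> ('ko,'km,'xo,'xm) ftr \<Rightarrow> ('ko,'km,'lo,'lm) ftr \<Rightarrow> ('lo \<Rightarrow> 'ko)
   \<Rightarrow> ('eo,'em) cat \<Rightarrow> ('xo,'xm,'eo,'em) ftr \<Rightarrow> ('lo,'lm,'eo,'em) ftr \<Rightarrow> (('lo+'xo) set, ('lm+'xm) list set, 'eo, 'em) ftr" where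
  "Wm L X f j \<rho> E P0 Q = ((\<lambda>a. case the_elem a of Inl l \<Rightarrow> fst Q l | Inr x \<Rightarrow> fst P0 x),
     (\<lambda>m. case the_elem (psrc L X m) of
        Inr x \<Rightarrow> (case the_elem (ptgt L X m) of Inr x' \<Rightarrow> snd P0 (ar X x x')
                  | Inl l \<Rightarrow> Cmp E (snd Q (ar L (fst j (\<rho> l)) l)) (snd P0 (ar X x (fst f (\<rho> l)))))
      | Inl l \<Rightarrow> (case the_elem (ptgt L X m) of Inl l' \<Rightarrow> snd Q (ar L l l') | Inr _ \<Rightarrow> undefined)))"

locale pmed = pcore K L X f j \<rho>
  for K :: "('ko,'km) cat" and L :: "('lo,'lm) cat" and X :: "('xo,'xm) cat"
    and f :: "('ko,'km,'xo,'xm) ftr" and j :: "('ko,'km,'lo,'lm) ftr" and \<rho> :: "'lo \<Rightarrow> 'ko" +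
  fixes E :: "('eo,'em) cat" and P0 :: "('xo,'xm,'eo,'em) ftr" and Q :: "('lo,'lm,'eo,'em) ftr"
  assumes catE: "category E" and funP0: "is_functor X E P0" and funQ: "is_functor L E Q"
    and eqPQ: "ftr_eq K (fcomp P0 f) (fcomp Q j)"
begin

interpretation T: thinloc Ob R "penc L X" "psrc L X" "ptgt L X" by (rule thin)

abbreviation "W \<equiv> Wm L X f j \<rho> E P0 Q"
abbreviation "px a b \<equiv> snd P0 (ar X a b)"
abbreviation "ql a b \<equiv> snd Q (ar L a b)"

lemma PQo: "k \<in> Obj K \<Longrightarrow> fst P0 (fst f k) = fst Q (fst j k)"
  using ftr_eqD(1)[OF eqPQ] unfolding fcomp_def by simp

lemma px: "leq X a b \<Longrightarrow> px a b \<in> Arr E \<and> Src E (px a b) = fst P0 a \<and> Tgt E (px a b) = fst P0 b"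
  using fun_le[OF posX funP0] by blast
lemma ql: "leq L a b \<Longrightarrow> ql a b \<in> Arr E \<and> Src E (ql a b) = fst Q a \<and> Tgt E (ql a b) = fst Q b"
  using fun_le[OF posL funQ] by blast
lemma px_cmp: "leq X a b \<Longrightarrow> leq X b c \<Longrightarrow> Cmp E (px b c) (px a b) = px a c"
  by (rule fun_cmp_ar[OF posX funP0])
lemma ql_cmp: "leq L a b \<Longrightarrow> leq L b c \<Longrightarrow> Cmp E (ql b c) (ql a b) = ql a c"
  by (rule fun_cmp_ar[OF posL funQ])

lemma pq_ar: assumes "leq K k k'" shows "px (fst f k) (fst f k') = ql (fst j k) (fst j k')"
proof -
  have a: "ar K k k' \<in> Arr K" using ar_prop[OF posK assms] by blast
  have "snd f (ar K k k') = ar X (fst f k) (fst f k')" by (rule fun_ar[OF posK posX funf assms])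
  moreover have "snd j (ar K k k') = ar L (fst j k) (fst j k')" by (rule fun_ar[OF posK posL funj assms])
  moreover have "snd P0 (snd f (ar K k k')) = snd Q (snd j (ar K k k'))"
    using ftr_eqD(2)[OF eqPQ a] unfolding fcomp_def by simp
  ultimately show ?thesis by simp
qed

lemma W_o: "fst W {Inr x} = fst P0 x" "fst W {Inl l} = fst Q l"
  unfolding Wm_def by simp_all

lemma W_rr: "x \<in> Obj X \<Longrightarrow> x' \<in> Obj X \<Longrightarrow> snd W (penc L X {Inr x} {Inr x'}) = px x x'"
  unfolding Wm_def using se[OF POb_I(2)] te[OF POb_I(2)] by simp
lemma W_rl: "x \<in> Obj X \<Longrightarrow> l \<in> Obj L \<Longrightarrow> l \<notin> fst j ` Obj K \<Longrightarrow>
   snd W (penc L X {Inr x} {Inl l}) = Cmp E (ql (fst j (\<rho> l)) l) (px x (fst f (\<rho> l)))"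
  unfolding Wm_def using se[OF POb_I(2)] te[OF POb_I(1)] by simp
lemma W_ll: "l \<in> Obj L \<Longrightarrow> l \<notin> fst j ` Obj K \<Longrightarrow> l' \<in> Obj L \<Longrightarrow> l' \<notin> fst j ` Obj K \<Longrightarrow>
   snd W (penc L X {Inl l} {Inl l'}) = ql l l'"
  unfolding Wm_def using se[OF POb_I(1)] te[OF POb_I(1)] by simp

lemma rl_arr:
  assumes x: "x \<in> Obj X" and l: "l \<in> Obj L" and r: "R {Inr x} {Inl l}"
  shows "Cmp E (ql (fst j (\<rho> l)) l) (px x (fst f (\<rho> l))) \<in> Arr E"
    "Src E (Cmp E (ql (fst j (\<rho> l)) l) (px x (fst f (\<rho> l)))) = fst P0 x"
    "Tgt E (Cmp E (ql (fst j (\<rho> l)) l) (px x (fst f (\<rho> l)))) = fst Q l"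
proof -
  note m = mixed[OF x l r]
  note A = px[OF m(3)] and B = ql[OF m(2)]
  have eq: "Tgt E (px x (fst f (\<rho> l))) = Src E (ql (fst j (\<rho> l)) l)" using A B PQo[OF m(1)] by simp
  show "Cmp E (ql (fst j (\<rho> l)) l) (px x (fst f (\<rho> l))) \<in> Arr E"
    "Src E (Cmp E (ql (fst j (\<rho> l)) l) (px x (fst f (\<rho> l)))) = fst P0 x"
    "Tgt E (Cmp E (ql (fst j (\<rho> l)) l) (px x (fst f (\<rho> l)))) = fst Q l"
    using catD(6,7,8)[OF catE A[THEN conjunct1] B[THEN conjunct1] eq] A B by simp_all
qed

lemma W_arr:
  assumes a: "a \<in> Ob" and b: "b \<in> Ob" and r: "R a b"
  shows "snd W (penc L X a b) \<in> Arr E \<and> Src E (snd W (penc L X a b)) = fst W a \<and> Tgt E (snd W (penc L X a b)) = fst W b"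
  using a
proof (cases rule: POb_E)
  case A: (inl l)
  from b show ?thesis
  proof (cases rule: POb_E)
    case B: (inl l')
    have "leq L l l'" using r A B by (simp add: PR_simps)
    thus ?thesis using A B W_ll W_o ql by simp
  next
    case B: (inr x) thus ?thesis using r A by (simp add: PR_simps)
  qed
next
  case A: (inr x)
  from b show ?thesis
  proof (cases rule: POb_E)
    case B: (inl l)
    thus ?thesis using A B W_rl W_o rl_arr r by simp
  next
    case B: (inr x')
    have "leq X x x'" using r A B by (simp add: PR_simps)
    thus ?thesis using A B W_rr W_o px by simp
  qed
qed


lemma assocE: "f1 \<in> Arr E \<Longrightarrow> g1 \<in> Arr E \<Longrightarrow> h1 \<in> Arr E \<Longrightarrow> Tgt E f1 = Src E g1 \<Longrightarrow> Tgt E g1 = Src E h1 \<Longrightarrow>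
   Cmp E h1 (Cmp E g1 f1) = Cmp E (Cmp E h1 g1) f1"
  by (rule catD(11)[OF catE])

lemma comp_rrl:
  assumes x: "x \<in> Obj X" and x': "x' \<in> Obj X" and l: "l \<in> Obj L" and xx: "leq X x x'" and r: "R {Inr x'} {Inl l}"
  shows "Cmp E (Cmp E (ql (fst j (\<rho> l)) l) (px x' (fst f (\<rho> l)))) (px x x') = Cmp E (ql (fst j (\<rho> l)) l) (px x (fst f (\<rho> l)))"
proof -
  note m = mixed[OF x' l r]
  note A = px[OF xx] and B = px[OF m(3)] and C = ql[OF m(2)]
  have "Cmp E (Cmp E (ql (fst j (\<rho> l)) l) (px x' (fst f (\<rho> l)))) (px x x') =
        Cmp E (ql (fst j (\<rho> l)) l) (Cmp E (px x' (fst f (\<rho> l))) (px x x'))"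
    by (rule assocE[symmetric]) (use A B C PQo[OF m(1)] in simp_all)
  also have "Cmp E (px x' (fst f (\<rho> l))) (px x x') = px x (fst f (\<rho> l))" by (rule px_cmp[OF xx m(3)])
  finally show ?thesis .
qed

lemma comp_rll:
  assumes x: "x \<in> Obj X" and l: "l \<in> Obj L" and l': "l' \<in> Obj L" and ll: "leq L l l'" and r: "R {Inr x} {Inl l}"
  shows "Cmp E (ql l l') (Cmp E (ql (fst j (\<rho> l)) l) (px x (fst f (\<rho> l)))) = Cmp E (ql (fst j (\<rho> l')) l') (px x (fst f (\<rho> l')))"
proof -
  note m = mixed[OF x l r]
  have jl': "leq L (fst j (\<rho> l)) l'" using le_trans[OF posL m(2) ll] .
  note r' = rho[OF l' m(1) jl']
  have r2: "R {Inr x} {Inl l'}" using m(1) m(3) jl' by (auto simp: PR_simps)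
  note m' = mixed[OF x l' r2]
  have kk: "leq K (\<rho> l) (\<rho> l')" using r' by simp
  have jj: "leq L (fst j (\<rho> l)) (fst j (\<rho> l'))" using fun_le2[OF posK funj kk] .
  have ff: "leq X (fst f (\<rho> l)) (fst f (\<rho> l'))" using fun_le2[OF posK funf kk] .
  note A = px[OF m(3)] and B = ql[OF m(2)] and C = ql[OF ll] and D = px[OF ff] and F = ql[OF m'(2)]
  have "Cmp E (ql l l') (Cmp E (ql (fst j (\<rho> l)) l) (px x (fst f (\<rho> l)))) =
        Cmp E (Cmp E (ql l l') (ql (fst j (\<rho> l)) l)) (px x (fst f (\<rho> l)))"
    by (rule assocE) (use A B C PQo[OF m(1)] in simp_all)
  also have "Cmp E (ql l l') (ql (fst j (\<rho> l)) l) = ql (fst j (\<rho> l)) l'" by (rule ql_cmp[OF m(2) ll])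
  also have "ql (fst j (\<rho> l)) l' = Cmp E (ql (fst j (\<rho> l')) l') (ql (fst j (\<rho> l)) (fst j (\<rho> l')))"
    by (rule ql_cmp[OF jj m'(2), symmetric])
  also have "ql (fst j (\<rho> l)) (fst j (\<rho> l')) = px (fst f (\<rho> l)) (fst f (\<rho> l'))" by (rule pq_ar[OF kk, symmetric])
  also have "Cmp E (Cmp E (ql (fst j (\<rho> l')) l') (px (fst f (\<rho> l)) (fst f (\<rho> l')))) (px x (fst f (\<rho> l))) =
      Cmp E (ql (fst j (\<rho> l')) l') (Cmp E (px (fst f (\<rho> l)) (fst f (\<rho> l'))) (px x (fst f (\<rho> l))))"
    by (rule assocE[symmetric]) (use A D F PQo[OF m'(1)] in simp_all)
  also have "Cmp E (px (fst f (\<rho> l)) (fst f (\<rho> l'))) (px x (fst f (\<rho> l))) = px x (fst f (\<rho> l'))"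
    by (rule px_cmp[OF m(3) ff])
  finally show ?thesis .
qed

lemma W_id: "a \<in> Ob \<Longrightarrow> snd W (penc L X a a) = Idt E (fst W a)"
proof (erule POb_E)
  fix l assume "a = {Inl l}" "l \<in> Obj L" "l \<notin> fst j ` Obj K"
  thus ?thesis using W_ll W_o ar_id[OF posL] funD(5)[OF funQ] by simp
next
  fix x assume "a = {Inr x}" "x \<in> Obj X"
  thus ?thesis using W_rr W_o ar_id[OF posX] funD(5)[OF funP0] by simp
qed

lemma W_comp:
  assumes a: "a \<in> Ob" and b: "b \<in> Ob" and c: "c \<in> Ob" and ab: "R a b" and bc: "R b c"
  shows "snd W (penc L X a c) = Cmp E (snd W (penc L X b c)) (snd W (penc L X a b))"
  using a
proof (cases rule: POb_E)
  case A: (inl l)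
  from b show ?thesis
  proof (cases rule: POb_E)
    case B: (inr x) thus ?thesis using ab A by (simp add: PR_simps)
  next
    case B: (inl l')
    from c show ?thesis
    proof (cases rule: POb_E)
      case C: (inr x) thus ?thesis using bc B by (simp add: PR_simps)
    next
      case C: (inl l'')
      have "leq L l l'" "leq L l' l''" using ab bc A B C by (simp_all add: PR_simps)
      thus ?thesis using A B C W_ll ql_cmp by simp
    qed
  qed
next
  case A: (inr x)
  from b show ?thesis
  proof (cases rule: POb_E)
    case B: (inl l)
    from c show ?thesis
    proof (cases rule: POb_E)
      case C: (inr x) thus ?thesis using bc B by (simp add: PR_simps)
    next
      case C: (inl l')
      have "leq L l l'" using bc B C by (simp add: PR_simps)
      thus ?thesis using A B C W_rl W_ll comp_rll ab by simp
    qed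
  next
    case B: (inr x')
    have xx: "leq X x x'" using ab A B by (simp add: PR_simps)
    from c show ?thesis
    proof (cases rule: POb_E)
      case C: (inr x'')
      have "leq X x' x''" using bc B C by (simp add: PR_simps)
      thus ?thesis using A B C W_rr px_cmp xx by simp
    next
      case C: (inl l)
      thus ?thesis using A B C W_rl W_rr comp_rrl xx bc by simp
    qed
  qed
qed

lemma funW: "is_functor P E W"
  unfolding is_functor_def
proof (intro conjI ballI impI)
  fix a assume "a \<in> Obj P"
  hence "a \<in> Ob" by (simp add: P_simps)
  thus "fst W a \<in> Obj E"
  proof (cases rule: POb_E)
    case (inl l) thus ?thesis using W_o funD(1)[OF funQ] by simp
  next
    case (inr x) thus ?thesis using W_o funD(1)[OF funP0] by simp
  qed
  show "snd W (Idt P a) = Idt E (fst W a)" using W_id \<open>a \<in> Ob\<close> by (simp add: P_simps)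
next
  fix m assume "m \<in> Arr P"
  then obtain a b where ab: "a\<in>Ob" "b\<in>Ob" "R a b" "m = penc L X a b" by (rule arrP_E)
  have st: "Src P m = a" "Tgt P m = b" using ab se te by (simp_all add: P_simps)
  show "snd W m \<in> Arr E" "Src E (snd W m) = fst W (Src P m)" "Tgt E (snd W m) = fst W (Tgt P m)"
    using W_arr[OF ab(1-3)] ab(4) st by simp_all
next
  fix m1 m2 assume m1: "m1 \<in> Arr P" and m2: "m2 \<in> Arr P" and eq: "Tgt P m1 = Src P m2"
  obtain a b where ab: "a\<in>Ob" "b\<in>Ob" "R a b" "m1 = penc L X a b" using m1 by (rule arrP_E)
  obtain b' c where bc: "b'\<in>Ob" "c\<in>Ob" "R b' c" "m2 = penc L X b' c" using m2 by (rule arrP_E)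
  have "b' = b" using eq ab bc se te by (simp add: P_simps)
  hence "Cmp P m2 m1 = penc L X a c" using ab bc se te by (simp add: P_simps)
  thus "snd W (Cmp P m2 m1) = Cmp E (snd W m2) (snd W m1)"
    using W_comp[OF ab(1,2) bc(2) ab(3)] bc \<open>b' = b\<close> ab(4) by simp
qed


lemma WU: "ftr_eq X (fcomp W (UP L X)) P0"
  unfolding ftr_eq_def
proof (intro conjI ballI)
  fix x assume "x \<in> Obj X" thus "fst (fcomp W (UP L X)) x = fst P0 x"
    unfolding fcomp_def UP_def using W_o by simp
next
  fix \<phi> assume p: "\<phi> \<in> Arr X"
  have o: "Src X \<phi> \<in> Obj X" "Tgt X \<phi> \<in> Obj X" using catD(1,2)[OF catX p] by simp_all
  show "snd (fcomp W (UP L X)) \<phi> = snd P0 \<phi>"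
    unfolding fcomp_def UP_def using W_rr[OF o] ar_eq[OF posX p] by simp
qed

lemma WV: "ftr_eq L (fcomp W (VP K L X f j)) Q"
  unfolding ftr_eq_def
proof (intro conjI ballI)
  fix l assume l: "l \<in> Obj L"
  show "fst (fcomp W (VP K L X f j)) l = fst Q l"
  proof (cases "l \<in> fst j ` Obj K")
    case True
    then obtain k where "k \<in> Obj K" "l = fst j k" by blast
    thus ?thesis unfolding fcomp_def VP_def using vo_j W_o PQo by simp
  next
    case False thus ?thesis unfolding fcomp_def VP_def using vo_n W_o by simp
  qed
next
  fix \<phi> assume p: "\<phi> \<in> Arr L"
  define s t where "s = Src L \<phi>" and "t = Tgt L \<phi>"
  have o: "s \<in> Obj L" "t \<in> Obj L" using catD(1,2)[OF catL p] s_def t_def by simp_all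
  have le: "leq L s t" unfolding leq_def s_def t_def using p by blast
  have ph: "\<phi> = ar L s t" using ar_eq[OF posL p] s_def t_def by simp
  have V: "snd (fcomp W (VP K L X f j)) \<phi> = snd W (penc L X (vo K f j s) (vo K f j t))"
    unfolding fcomp_def VP_def s_def t_def by simp
  show "snd (fcomp W (VP K L X f j)) \<phi> = snd Q \<phi>"
  proof (cases "t \<in> fst j ` Obj K")
    case True
    then obtain k' where k': "k' \<in> Obj K" "t = fst j k'" by blast
    have "s \<in> fst j ` Obj K" using sieve[OF p] True s_def t_def by simp
    then obtain k where k: "k \<in> Obj K" "s = fst j k" by blast
    have kk: "leq K k k'" using reflect[OF k(1) k'(1)] le k k' by simp
    show ?thesis using V vo_j[OF k(1)] vo_j[OF k'(1)] W_rr[OF fobj[OF k(1)] fobj[OF k'(1)]] pq_ar[OF kk] ph k k'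
      by simp
  next
    case False
    note vt = vo_n[OF False]
    show ?thesis
    proof (cases "s \<in> fst j ` Obj K")
      case True
      then obtain k where k: "k \<in> Obj K" "s = fst j k" by blast
      note r = rho[OF o(2) k(1) le[unfolded k(2)]]
      have kr: "leq L (fst j k) (fst j (\<rho> t))" using fun_le2[OF posK funj] r by blast
      have "snd (fcomp W (VP K L X f j)) \<phi> = Cmp E (ql (fst j (\<rho> t)) t) (px (fst f k) (fst f (\<rho> t)))"
        using V vo_j[OF k(1)] vt W_rl[OF fobj[OF k(1)] o(2) False] k by simp
      also have "px (fst f k) (fst f (\<rho> t)) = ql (fst j k) (fst j (\<rho> t))" using pq_ar r by blast
      also have "Cmp E (ql (fst j (\<rho> t)) t) (ql (fst j k) (fst j (\<rho> t))) = ql (fst j k) t"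
        using ql_cmp[OF kr] r by blast
      finally show ?thesis using ph k by simp
    next
      case F2: False
      show ?thesis using V vt vo_n[OF F2] W_ll[OF o(1) F2 o(2) False] ph by simp
    qed
  qed
qed

lemma W_unique:
  assumes fW: "is_functor P E W'" and eU: "ftr_eq X (fcomp W' (UP L X)) P0"
    and eV: "ftr_eq L (fcomp W' (VP K L X f j)) Q"
  shows "ftr_eq P W W'"
  unfolding ftr_eq_def
proof (intro conjI ballI)
  fix a assume "a \<in> Obj P"
  hence "a \<in> Ob" by (simp add: P_simps)
  thus "fst W a = fst W' a"
  proof (cases rule: POb_E)
    case (inl l)
    have "fst W' (vo K f j l) = fst Q l" using ftr_eqD(1)[OF eV inl(2)] unfolding fcomp_def VP_def by simp
    thus ?thesis using inl vo_n W_o by simp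
  next
    case (inr x)
    have "fst W' {Inr x} = fst P0 x" using ftr_eqD(1)[OF eU inr(2)] unfolding fcomp_def UP_def by simp
    thus ?thesis using inr W_o by simp
  qed
next
  fix m assume "m \<in> Arr P"
  then obtain a b where ab: "a\<in>Ob" "b\<in>Ob" "R a b" "m = penc L X a b" by (rule arrP_E)
  from ab(1) show "snd W m = snd W' m"
  proof (cases rule: POb_E)
    case A: (inl l)
    from ab(2) show ?thesis
    proof (cases rule: POb_E)
      case B: (inr x) thus ?thesis using ab A by (simp add: PR_simps)
    next
      case B: (inl l')
      have le: "leq L l l'" using ab A B by (simp add: PR_simps)
      note ap = ar_prop[OF posL le]
      have "snd (VP K L X f j) (ar L l l') = m" unfolding VP_def using ap ab(4) A B vo_n by simp
      moreover have "snd W' (snd (VP K L X f j) (ar L l l')) = ql l l'"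
        using ftr_eqD(2)[OF eV ap(1)] unfolding fcomp_def by simp
      ultimately show ?thesis using W_ll A B ab(4) by simp
    qed
  next
    case A: (inr x)
    from ab(2) show ?thesis
    proof (cases rule: POb_E)
      case B: (inr x')
      have le: "leq X x x'" using ab A B by (simp add: PR_simps)
      note ap = ar_prop[OF posX le]
      have "snd (UP L X) (ar X x x') = m" unfolding UP_def using ap ab(4) A B by simp
      moreover have "snd W' (snd (UP L X) (ar X x x')) = px x x'"
        using ftr_eqD(2)[OF eU ap(1)] unfolding fcomp_def by simp
      ultimately show ?thesis using W_rr A B ab(4) by simp
    next
      case B: (inl l)
      have r: "R {Inr x} {Inl l}" using ab A B by simp
      note mx = mixed[OF A(2) B(2) r]
      note a1 = ar_prop[OF posL mx(2)] and a2 = ar_prop[OF posX mx(3)]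
      define g where "g = snd (VP K L X f j) (ar L (fst j (\<rho> l)) l)"
      define h where "h = snd (UP L X) (ar X x (fst f (\<rho> l)))"
      have g: "g \<in> Arr P" "Src P g = {Inr (fst f (\<rho> l))}" "Tgt P g = {Inl l}"
        using funD(2,3,4)[OF funV a1(1)] a1 vo_j[OF mx(1)] vo_n[OF B(3)] unfolding g_def by (simp_all add: VP_def)
      have h: "h \<in> Arr P" "Src P h = {Inr x}" "Tgt P h = {Inr (fst f (\<rho> l))}"
        using funD(2,3,4)[OF funU a2(1)] a2 unfolding h_def by (simp_all add: UP_def)
      have "Cmp P g h = m" using g h ab(4) A B by (simp add: P_simps)
      hence "snd W' m = Cmp E (snd W' g) (snd W' h)" using funD(6)[OF fW h(1) g(1)] g h by simp
      also have "snd W' g = ql (fst j (\<rho> l)) l" using ftr_eqD(2)[OF eV a1(1)] unfolding fcomp_def g_def by simp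
      also have "snd W' h = px x (fst f (\<rho> l))" using ftr_eqD(2)[OF eU a2(1)] unfolding fcomp_def h_def by simp
      finally show ?thesis using W_rl[OF A(2) B(2,3)] A B ab(4) by simp
    qed
  qed
qed

end

context pcore begin

lemma univ:
  assumes catE: "category E"
  shows "po_univ K X L P f j (UP L X) (VP K L X f j) E"
  unfolding po_univ_def
proof (intro allI impI)
  fix P0 Q assume a: "is_functor X E P0 \<and> is_functor L E Q \<and> ftr_eq K (fcomp P0 f) (fcomp Q j)"
  interpret M: pmed K L X f j \<rho> E P0 Q
    by (rule pmed.intro, rule pcore_axioms) (unfold_locales, use catE a in auto)
  show "\<exists>W. is_functor P E W \<and> ftr_eq X (fcomp W (UP L X)) P0 \<and> ftr_eq L (fcomp W (VP K L X f j)) Q \<and>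
           (\<forall>W'. is_functor P E W' \<and> ftr_eq X (fcomp W' (UP L X)) P0 \<and> ftr_eq L (fcomp W' (VP K L X f j)) Q
                  \<longrightarrow> ftr_eq P W W')"
    using M.funW M.WU M.WV M.W_unique by blast
qed

lemma square: "comm_square K X L P f j (UP L X) (VP K L X f j)"
  unfolding comm_square_def using catK catX catL catP funf funj funU funV comm by blast

end


definition oa :: "('g \<Rightarrow> ('lo,'lm,'lo,'lm) ftr) \<Rightarrow> ('g \<Rightarrow> ('xo,'xm,'xo,'xm) ftr) \<Rightarrow> 'g \<Rightarrow> ('lo+'xo) set \<Rightarrow> ('lo+'xo) set" where
  "oa aL aX g a = (case the_elem a of Inl l \<Rightarrow> {Inl (fst (aL g) l)} | Inr x \<Rightarrow> {Inr (fst (aX g) x)})"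

definition aP :: "('lo,'lm) cat \<Rightarrow> ('xo,'xm) cat \<Rightarrow> ('g \<Rightarrow> ('lo,'lm,'lo,'lm) ftr) \<Rightarrow> ('g \<Rightarrow> ('xo,'xm,'xo,'xm) ftr) \<Rightarrow> 'g
   \<Rightarrow> (('lo+'xo) set, ('lm+'xm) list set, ('lo+'xo) set, ('lm+'xm) list set) ftr" where
  "aP L X aL aX g = (oa aL aX g, \<lambda>m. penc L X (oa aL aX g (psrc L X m)) (oa aL aX g (ptgt L X m)))"

lemma oa_simps: "oa aL aX g {Inl l} = {Inl (fst (aL g) l)}" "oa aL aX g {Inr x} = {Inr (fst (aX g) x)}"
  unfolding oa_def by simp_all

lemma gcat_inv:
  assumes grp: "group G" and gC: "gcat G C act" and g: "g \<in> carrier G" and x: "x \<in> Obj C"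
  shows "fst (act (inv\<^bsub>G\<^esub> g)) (fst (act g) x) = x"
proof -
  have ig: "inv\<^bsub>G\<^esub> g \<in> carrier G" using group.inv_closed[OF grp g] .
  have "fst (act (inv\<^bsub>G\<^esub> g \<otimes>\<^bsub>G\<^esub> g)) x = fst (act (inv\<^bsub>G\<^esub> g)) (fst (act g) x)"
    using ftr_eqD(1)[OF gcatD(4)[OF gC ig g] x] unfolding fcomp_def by simp
  moreover have "inv\<^bsub>G\<^esub> g \<otimes>\<^bsub>G\<^esub> g = \<one>\<^bsub>G\<^esub>" using group.l_inv[OF grp g] .
  moreover have "fst (act \<one>\<^bsub>G\<^esub>) x = x" using ftr_eqD(1)[OF gcatD(3)[OF gC] x] unfolding idF_def by simp
  ultimately show ?thesis by simp
qed

locale gcore = pcore K L X f j \<rho>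
  for K :: "('ko,'km) cat" and L :: "('lo,'lm) cat" and X :: "('xo,'xm) cat"
    and f :: "('ko,'km,'xo,'xm) ftr" and j :: "('ko,'km,'lo,'lm) ftr" and \<rho> :: "'lo \<Rightarrow> 'ko" +
  fixes G :: "('g,'b) monoid_scheme" and aK :: "'g \<Rightarrow> ('ko,'km,'ko,'km) ftr"
    and aL :: "'g \<Rightarrow> ('lo,'lm,'lo,'lm) ftr" and aX :: "'g \<Rightarrow> ('xo,'xm,'xo,'xm) ftr"
  assumes grp: "group G" and gK: "gcat G K aK" and gL: "gcat G L aL" and gX: "gcat G X aX"
    and gf: "gfunctor G K aK X aX f" and gj: "gfunctor G K aK L aL j"
    and rho_eq: "\<And>g l k. g \<in> carrier G \<Longrightarrow> l \<in> Obj L \<Longrightarrow> k \<in> Obj K \<Longrightarrow> leq L (fst j k) l \<Longrightarrow>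
        \<rho> (fst (aL g) l) = fst (aK g) (\<rho> l)"
begin

interpretation T: thinloc Ob R "penc L X" "psrc L X" "ptgt L X" by (rule thin)

abbreviation "act \<equiv> aP L X aL aX"

lemma fK: "g \<in> carrier G \<Longrightarrow> is_functor K K (aK g)" by (rule gcatD(2)[OF gK])
lemma fL: "g \<in> carrier G \<Longrightarrow> is_functor L L (aL g)" by (rule gcatD(2)[OF gL])
lemma fX: "g \<in> carrier G \<Longrightarrow> is_functor X X (aX g)" by (rule gcatD(2)[OF gX])

lemma jeq: "g \<in> carrier G \<Longrightarrow> k \<in> Obj K \<Longrightarrow> fst j (fst (aK g) k) = fst (aL g) (fst j k)"
  by (rule gfunD(2)[OF gj])
lemma feq: "g \<in> carrier G \<Longrightarrow> k \<in> Obj K \<Longrightarrow> fst f (fst (aK g) k) = fst (aX g) (fst f k)"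
  by (rule gfunD(2)[OF gf])

lemma notj:
  assumes g: "g \<in> carrier G" and l: "l \<in> Obj L" and n: "l \<notin> fst j ` Obj K"
  shows "fst (aL g) l \<notin> fst j ` Obj K"
proof
  assume "fst (aL g) l \<in> fst j ` Obj K"
  then obtain k where k: "k \<in> Obj K" "fst (aL g) l = fst j k" by blast
  have ig: "inv\<^bsub>G\<^esub> g \<in> carrier G" using group.inv_closed[OF grp g] .
  have "l = fst (aL (inv\<^bsub>G\<^esub> g)) (fst j k)" using gcat_inv[OF grp gL g l] k by simp
  also have "\<dots> = fst j (fst (aK (inv\<^bsub>G\<^esub> g)) k)" using jeq[OF ig k(1)] by simp
  finally have "l \<in> fst j ` Obj K" using funD(1)[OF fK[OF ig] k(1)] by blast
  thus False using n by simp
qed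

lemma oa_ob: "g \<in> carrier G \<Longrightarrow> a \<in> Ob \<Longrightarrow> oa aL aX g a \<in> Ob"
proof (erule POb_E)
  fix l assume g: "g \<in> carrier G" and "a = {Inl l}" "l \<in> Obj L" "l \<notin> fst j ` Obj K"
  thus ?thesis using notj[OF g] funD(1)[OF fL[OF g]] POb_I(1) oa_simps by metis
next
  fix x assume g: "g \<in> carrier G" and "a = {Inr x}" "x \<in> Obj X"
  thus ?thesis using funD(1)[OF fX[OF g]] POb_I(2) oa_simps by metis
qed

lemma oa_R: assumes g: "g \<in> carrier G" and a: "a \<in> Ob" and b: "b \<in> Ob" and r: "R a b"
  shows "R (oa aL aX g a) (oa aL aX g b)"
  using a
proof (cases rule: POb_E)
  case A: (inl l)
  from b show ?thesis
  proof (cases rule: POb_E)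
    case B: (inr x) thus ?thesis using r A by (simp add: PR_simps)
  next
    case B: (inl l')
    have "leq L l l'" using r A B by (simp add: PR_simps)
    thus ?thesis using A B fun_le2[OF posL fL[OF g]] by (simp add: PR_simps oa_simps)
  qed
next
  case A: (inr x)
  from b show ?thesis
  proof (cases rule: POb_E)
    case B: (inr x')
    have "leq X x x'" using r A B by (simp add: PR_simps)
    thus ?thesis using A B fun_le2[OF posX fX[OF g]] by (simp add: PR_simps oa_simps)
  next
    case B: (inl l)
    obtain k where k: "k \<in> Obj K" "leq X x (fst f k)" "leq L (fst j k) l" using r A B by (auto simp: PR_simps)
    have "leq X (fst (aX g) x) (fst (aX g) (fst f k))" using fun_le2[OF posX fX[OF g] k(2)] .
    hence 1: "leq X (fst (aX g) x) (fst f (fst (aK g) k))" using feq[OF g k(1)] by simp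
    have "leq L (fst (aL g) (fst j k)) (fst (aL g) l)" using fun_le2[OF posL fL[OF g] k(3)] .
    hence 2: "leq L (fst j (fst (aK g) k)) (fst (aL g) l)" using jeq[OF g k(1)] by simp
    have 3: "fst (aK g) k \<in> Obj K" using funD(1)[OF fK[OF g] k(1)] .
    show ?thesis using A B 1 2 3 by (auto simp: PR_simps oa_simps)
  qed
qed

lemma act_functor: "g \<in> carrier G \<Longrightarrow> is_functor P P (act g)"
proof -
  assume g: "g \<in> carrier G"
  have "is_functor P P (oa aL aX g, \<lambda>\<phi>. penc L X (oa aL aX g (Src P \<phi>)) (oa aL aX g (Tgt P \<phi>)))"
    apply (subst (2) PC_def)
  proof (rule thin_functor[OF catP thin])
    fix a assume "a \<in> Obj P" thus "oa aL aX g a \<in> Ob" using oa_ob[OF g] by (simp add: P_simps)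
  next
    fix \<phi> assume "\<phi> \<in> Arr P"
    then obtain a b where "a\<in>Ob" "b\<in>Ob" "R a b" "\<phi> = penc L X a b" by (rule arrP_E)
    thus "R (oa aL aX g (Src P \<phi>)) (oa aL aX g (Tgt P \<phi>))" using oa_R[OF g] se te by (simp add: P_simps)
  qed
  thus ?thesis unfolding aP_def P_simps .
qed

lemma oa_one: "a \<in> Ob \<Longrightarrow> oa aL aX \<one>\<^bsub>G\<^esub> a = a"
proof (erule POb_E)
  fix l assume "a = {Inl l}" "l \<in> Obj L"
  thus ?thesis using ftr_eqD(1)[OF gcatD(3)[OF gL]] by (simp add: oa_simps idF_def)
next
  fix x assume "a = {Inr x}" "x \<in> Obj X"
  thus ?thesis using ftr_eqD(1)[OF gcatD(3)[OF gX]] by (simp add: oa_simps idF_def)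
qed

lemma oa_mult: "g \<in> carrier G \<Longrightarrow> h \<in> carrier G \<Longrightarrow> a \<in> Ob \<Longrightarrow> oa aL aX (g \<otimes>\<^bsub>G\<^esub> h) a = oa aL aX g (oa aL aX h a)"
proof (erule POb_E)
  fix l assume gh: "g \<in> carrier G" "h \<in> carrier G" and "a = {Inl l}" "l \<in> Obj L"
  thus ?thesis using ftr_eqD(1)[OF gcatD(4)[OF gL gh]] by (simp add: oa_simps fcomp_def)
next
  fix x assume gh: "g \<in> carrier G" "h \<in> carrier G" and "a = {Inr x}" "x \<in> Obj X"
  thus ?thesis using ftr_eqD(1)[OF gcatD(4)[OF gX gh]] by (simp add: oa_simps fcomp_def)
qed

lemma gcatP: "gcat G P act"
  unfolding gcat_def
proof (intro conjI ballI catP act_functor)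
  show "ftr_eq P (act \<one>\<^bsub>G\<^esub>) idF"
    unfolding ftr_eq_def
  proof (intro conjI ballI)
    fix a assume "a \<in> Obj P" thus "fst (act \<one>\<^bsub>G\<^esub>) a = fst idF a" using oa_one by (simp add: P_simps aP_def idF_def)
  next
    fix m assume "m \<in> Arr P"
    then obtain a b where "a\<in>Ob" "b\<in>Ob" "R a b" "m = penc L X a b" by (rule arrP_E)
    thus "snd (act \<one>\<^bsub>G\<^esub>) m = snd idF m" using oa_one se te by (simp add: aP_def idF_def)
  qed
next
  fix g h assume g: "g \<in> carrier G" and h: "h \<in> carrier G"
  show "ftr_eq P (act (g \<otimes>\<^bsub>G\<^esub> h)) (fcomp (act g) (act h))"
    unfolding ftr_eq_def
  proof (intro conjI ballI)
    fix a assume "a \<in> Obj P" thus "fst (act (g \<otimes>\<^bsub>G\<^esub> h)) a = fst (fcomp (act g) (act h)) a"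
      using oa_mult[OF g h] by (simp add: P_simps aP_def fcomp_def)
  next
    fix m assume "m \<in> Arr P"
    then obtain a b where ab: "a\<in>Ob" "b\<in>Ob" "R a b" "m = penc L X a b" by (rule arrP_E)
    have o: "oa aL aX h a \<in> Ob" "oa aL aX h b \<in> Ob" using oa_ob[OF h] ab by simp_all
    show "snd (act (g \<otimes>\<^bsub>G\<^esub> h)) m = snd (fcomp (act g) (act h)) m"
      using oa_mult[OF g h] ab se te o by (simp add: aP_def fcomp_def)
  qed
qed

lemma gU: "gfunctor G X aX P act (UP L X)"
  unfolding gfunctor_def
proof (intro conjI ballI funU)
  fix g assume g: "g \<in> carrier G"
  show "ftr_eq X (fcomp (UP L X) (aX g)) (fcomp (act g) (UP L X))"
    unfolding ftr_eq_def
  proof (intro conjI ballI)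
    fix x assume "x \<in> Obj X" thus "fst (fcomp (UP L X) (aX g)) x = fst (fcomp (act g) (UP L X)) x"
      by (simp add: fcomp_def UP_def aP_def oa_simps)
  next
    fix \<phi> assume p: "\<phi> \<in> Arr X"
    have o: "{Inr (Src X \<phi>)} \<in> Ob" "{Inr (Tgt X \<phi>)} \<in> Ob" by (rule POb_I(2), rule catD(1)[OF catX p]) (rule POb_I(2), rule catD(2)[OF catX p])
    show "snd (fcomp (UP L X) (aX g)) \<phi> = snd (fcomp (act g) (UP L X)) \<phi>"
      using funD(3,4)[OF fX[OF g] p] se[OF o(1)] te[OF o(2)] by (simp add: fcomp_def UP_def aP_def oa_simps)
  qed
qed

lemma vo_act: assumes g: "g \<in> carrier G" and l: "l \<in> Obj L"
  shows "vo K f j (fst (aL g) l) = oa aL aX g (vo K f j l)"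
proof (cases "l \<in> fst j ` Obj K")
  case True
  then obtain k where k: "k \<in> Obj K" "l = fst j k" by blast
  have "fst (aL g) l = fst j (fst (aK g) k)" using jeq[OF g k(1)] k by simp
  moreover have "fst (aK g) k \<in> Obj K" using funD(1)[OF fK[OF g] k(1)] .
  ultimately show ?thesis using vo_j k feq[OF g k(1)] by (simp add: oa_simps)
next
  case False
  thus ?thesis using vo_n notj[OF g l False] by (simp add: oa_simps)
qed

lemma gV: "gfunctor G L aL P act (VP K L X f j)"
  unfolding gfunctor_def
proof (intro conjI ballI funV)
  fix g assume g: "g \<in> carrier G"
  show "ftr_eq L (fcomp (VP K L X f j) (aL g)) (fcomp (act g) (VP K L X f j))"
    unfolding ftr_eq_def
  proof (intro conjI ballI)
    fix l assume "l \<in> Obj L" thus "fst (fcomp (VP K L X f j) (aL g)) l = fst (fcomp (act g) (VP K L X f j)) l"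
      using vo_act[OF g] by (simp add: fcomp_def VP_def aP_def)
  next
    fix \<phi> assume p: "\<phi> \<in> Arr L"
    have o: "Src L \<phi> \<in> Obj L" "Tgt L \<phi> \<in> Obj L" using catD(1,2)[OF catL p] by simp_all
    have oo: "vo K f j (Src L \<phi>) \<in> Ob" "vo K f j (Tgt L \<phi>) \<in> Ob" using vo_ob o by simp_all
    show "snd (fcomp (VP K L X f j) (aL g)) \<phi> = snd (fcomp (act g) (VP K L X f j)) \<phi>"
      using funD(3,4)[OF fL[OF g] p] se[OF oo(1)] te[OF oo(2)] vo_act[OF g o(1)] vo_act[OF g o(2)]
      by (simp add: fcomp_def VP_def aP_def)
  qed
qed

end


lemma fcomp_functor: "is_functor A B F \<Longrightarrow> is_functor B C G \<Longrightarrow> is_functor A C (fcomp G F)"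
  unfolding is_functor_def fcomp_def by auto

lemma idF_functor: "category C \<Longrightarrow> is_functor C C idF"
  unfolding is_functor_def idF_def using catD by simp

lemma ftr_eq_mono: "ftr_eq C F F' \<Longrightarrow> Obj C' \<subseteq> Obj C \<Longrightarrow> Arr C' \<subseteq> Arr C \<Longrightarrow> ftr_eq C' F F'"
  unfolding ftr_eq_def by blast

lemma fix_sub: "Obj (fixcat C a H) \<subseteq> Obj C" "Arr (fixcat C a H) \<subseteq> Arr C"
  unfolding fixcat_simps by blast+

lemma po_transfer:
  assumes po: "po_univ A B C D F J U V E"
    and fPhi: "is_functor D D' Phi" and fPsi: "is_functor D' D Psi"
    and id: "ftr_eq D' (fcomp Phi Psi) idF"
    and U1: "ftr_eq B (fcomp Psi U') U" and V1: "ftr_eq C (fcomp Psi V') V"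
    and U2: "ftr_eq B (fcomp Phi U) U'" and V2: "ftr_eq C (fcomp Phi V) V'"
    and fU: "is_functor B D U" and fV: "is_functor C D V"
    and fU': "is_functor B D' U'" and fV': "is_functor C D' V'"
  shows "po_univ A B C D' F J U' V' E"
  unfolding po_univ_def
proof (intro allI impI)
  fix P Q assume a: "is_functor B E P \<and> is_functor C E Q \<and> ftr_eq A (fcomp P F) (fcomp Q J)"
  from po a obtain W where W: "is_functor D E W" "ftr_eq B (fcomp W U) P" "ftr_eq C (fcomp W V) Q"
    and Wu: "\<And>W'. is_functor D E W' \<Longrightarrow> ftr_eq B (fcomp W' U) P \<Longrightarrow> ftr_eq C (fcomp W' V) Q \<Longrightarrow> ftr_eq D W W'"
    unfolding po_univ_def by blast
  have c1: "ftr_eq B (fcomp (fcomp W Psi) U') P"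
    unfolding ftr_eq_def
  proof (intro conjI ballI)
    fix x assume x: "x \<in> Obj B"
    have "fst Psi (fst U' x) = fst U x" using ftr_eqD(1)[OF U1 x] unfolding fcomp_def by simp
    thus "fst (fcomp (fcomp W Psi) U') x = fst P x" using ftr_eqD(1)[OF W(2) x] unfolding fcomp_def by simp
  next
    fix x assume x: "x \<in> Arr B"
    have "snd Psi (snd U' x) = snd U x" using ftr_eqD(2)[OF U1 x] unfolding fcomp_def by simp
    thus "snd (fcomp (fcomp W Psi) U') x = snd P x" using ftr_eqD(2)[OF W(2) x] unfolding fcomp_def by simp
  qed
  have c2: "ftr_eq C (fcomp (fcomp W Psi) V') Q"
    unfolding ftr_eq_def
  proof (intro conjI ballI)
    fix x assume x: "x \<in> Obj C"
    have "fst Psi (fst V' x) = fst V x" using ftr_eqD(1)[OF V1 x] unfolding fcomp_def by simp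
    thus "fst (fcomp (fcomp W Psi) V') x = fst Q x" using ftr_eqD(1)[OF W(3) x] unfolding fcomp_def by simp
  next
    fix x assume x: "x \<in> Arr C"
    have "snd Psi (snd V' x) = snd V x" using ftr_eqD(2)[OF V1 x] unfolding fcomp_def by simp
    thus "snd (fcomp (fcomp W Psi) V') x = snd Q x" using ftr_eqD(2)[OF W(3) x] unfolding fcomp_def by simp
  qed
  have uq: "ftr_eq D' (fcomp W Psi) W'" if W': "is_functor D' E W'" "ftr_eq B (fcomp W' U') P" "ftr_eq C (fcomp W' V') Q" for W'
  proof -
    have e1: "ftr_eq B (fcomp (fcomp W' Phi) U) P"
      unfolding ftr_eq_def
    proof (intro conjI ballI)
      fix x assume x: "x \<in> Obj B"
      have "fst Phi (fst U x) = fst U' x" using ftr_eqD(1)[OF U2 x] unfolding fcomp_def by simp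
      thus "fst (fcomp (fcomp W' Phi) U) x = fst P x" using ftr_eqD(1)[OF W'(2) x] unfolding fcomp_def by simp
    next
      fix x assume x: "x \<in> Arr B"
      have "snd Phi (snd U x) = snd U' x" using ftr_eqD(2)[OF U2 x] unfolding fcomp_def by simp
      thus "snd (fcomp (fcomp W' Phi) U) x = snd P x" using ftr_eqD(2)[OF W'(2) x] unfolding fcomp_def by simp
    qed
    have e2: "ftr_eq C (fcomp (fcomp W' Phi) V) Q"
      unfolding ftr_eq_def
    proof (intro conjI ballI)
      fix x assume x: "x \<in> Obj C"
      have "fst Phi (fst V x) = fst V' x" using ftr_eqD(1)[OF V2 x] unfolding fcomp_def by simp
      thus "fst (fcomp (fcomp W' Phi) V) x = fst Q x" using ftr_eqD(1)[OF W'(3) x] unfolding fcomp_def by simp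
    next
      fix x assume x: "x \<in> Arr C"
      have "snd Phi (snd V x) = snd V' x" using ftr_eqD(2)[OF V2 x] unfolding fcomp_def by simp
      thus "snd (fcomp (fcomp W' Phi) V) x = snd Q x" using ftr_eqD(2)[OF W'(3) x] unfolding fcomp_def by simp
    qed
    have eq: "ftr_eq D W (fcomp W' Phi)" using Wu[OF fcomp_functor[OF fPhi W'(1)] e1 e2] .
    show ?thesis
      unfolding ftr_eq_def
    proof (intro conjI ballI)
      fix y assume y: "y \<in> Obj D'"
      have py: "fst Psi y \<in> Obj D" using funD(1)[OF fPsi y] .
      have "fst Phi (fst Psi y) = y" using ftr_eqD(1)[OF id y] unfolding fcomp_def idF_def by simp
      thus "fst (fcomp W Psi) y = fst W' y" using ftr_eqD(1)[OF eq py] unfolding fcomp_def by simp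
    next
      fix y assume y: "y \<in> Arr D'"
      have py: "snd Psi y \<in> Arr D" using funD(2)[OF fPsi y] .
      have "snd Phi (snd Psi y) = y" using ftr_eqD(2)[OF id y] unfolding fcomp_def idF_def by simp
      thus "snd (fcomp W Psi) y = snd W' y" using ftr_eqD(2)[OF eq py] unfolding fcomp_def by simp
    qed
  qed
  show "\<exists>W. is_functor D' E W \<and> ftr_eq B (fcomp W U') P \<and> ftr_eq C (fcomp W V') Q \<and>
           (\<forall>W'. is_functor D' E W' \<and> ftr_eq B (fcomp W' U') P \<and> ftr_eq C (fcomp W' V') Q \<longrightarrow> ftr_eq D' W W')"
    using fcomp_functor[OF fPsi W(1)] c1 c2 uq by blast
qed

context gcore begin

interpretation T: thinloc Ob R "penc L X" "psrc L X" "ptgt L X" by (rule thin)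

lemma gW:
  assumes gE: "gcat G E aE" and gP0: "gfunctor G X aX E aE P0" and gQ: "gfunctor G L aL E aE Q"
    and eq: "ftr_eq K (fcomp P0 f) (fcomp Q j)"
  shows "gfunctor G P act E aE (Wm L X f j \<rho> E P0 Q)"
proof -
  interpret M: pmed K L X f j \<rho> E P0 Q
    by (rule pmed.intro, rule pcore_axioms) (unfold_locales, use gcatD(1)[OF gE] gfunD(1)[OF gP0] gfunD(1)[OF gQ] eq in auto)
  show ?thesis
    unfolding gfunctor_def
  proof (intro conjI ballI M.funW)
    fix g assume g: "g \<in> carrier G"
    note fE = gcatD(2)[OF gE g]
    show "ftr_eq P (fcomp M.W (act g)) (fcomp (aE g) M.W)"
      unfolding ftr_eq_def
    proof (intro conjI ballI)
      fix a assume "a \<in> Obj P"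
      hence "a \<in> Ob" by (simp add: P_simps)
      thus "fst (fcomp M.W (act g)) a = fst (fcomp (aE g) M.W) a"
      proof (cases rule: POb_E)
        case (inl l) thus ?thesis using gfunD(2)[OF gQ g] by (simp add: fcomp_def aP_def oa_simps M.W_o)
      next
        case (inr x) thus ?thesis using gfunD(2)[OF gP0 g] by (simp add: fcomp_def aP_def oa_simps M.W_o)
      qed
    next
      fix m assume "m \<in> Arr P"
      then obtain a b where ab: "a\<in>Ob" "b\<in>Ob" "R a b" "m = penc L X a b" by (rule arrP_E)
      have act_m: "snd (act g) m = penc L X (oa aL aX g a) (oa aL aX g b)" using ab se te by (simp add: aP_def)
      have lhs: "snd (fcomp M.W (act g)) m = snd M.W (penc L X (oa aL aX g a) (oa aL aX g b))"
        using act_m by (simp add: fcomp_def)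
      have rhs: "snd (fcomp (aE g) M.W) m = snd (aE g) (snd M.W (penc L X a b))" using ab by (simp add: fcomp_def)
      show "snd (fcomp M.W (act g)) m = snd (fcomp (aE g) M.W) m"
        unfolding lhs rhs
        using ab(1)
      proof (cases rule: POb_E)
        case A: (inl l)
        from ab(2) show "snd M.W (penc L X (oa aL aX g a) (oa aL aX g b)) = snd (aE g) (snd M.W (penc L X a b))"
        proof (cases rule: POb_E)
          case B: (inr x) thus ?thesis using ab A by (simp add: PR_simps)
        next
          case B: (inl l')
          have le: "leq L l l'" using ab A B by (simp add: PR_simps)
          note ap = ar_prop[OF posL le]
          have "snd M.W (penc L X (oa aL aX g a) (oa aL aX g b)) = M.ql (fst (aL g) l) (fst (aL g) l')"
            using A B M.W_ll funD(1)[OF fL[OF g]] notj[OF g] by (simp add: oa_simps)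
          also have "ar L (fst (aL g) l) (fst (aL g) l') = snd (aL g) (ar L l l')"
            using fun_ar[OF posL posL fL[OF g] le] by simp
          also have "snd Q (snd (aL g) (ar L l l')) = snd (aE g) (M.ql l l')" using gfunD(3)[OF gQ g ap(1)] .
          finally show ?thesis using A B M.W_ll by simp
        qed
      next
        case A: (inr x)
        from ab(2) show "snd M.W (penc L X (oa aL aX g a) (oa aL aX g b)) = snd (aE g) (snd M.W (penc L X a b))"
        proof (cases rule: POb_E)
          case B: (inr x')
          have le: "leq X x x'" using ab A B by (simp add: PR_simps)
          note ap = ar_prop[OF posX le]
          have "snd M.W (penc L X (oa aL aX g a) (oa aL aX g b)) = M.px (fst (aX g) x) (fst (aX g) x')"
            using A B M.W_rr funD(1)[OF fX[OF g]] by (simp add: oa_simps)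
          also have "ar X (fst (aX g) x) (fst (aX g) x') = snd (aX g) (ar X x x')"
            using fun_ar[OF posX posX fX[OF g] le] by simp
          also have "snd P0 (snd (aX g) (ar X x x')) = snd (aE g) (M.px x x')" using gfunD(3)[OF gP0 g ap(1)] .
          finally show ?thesis using A B M.W_rr by simp
        next
          case B: (inl l)
          have r: "R {Inr x} {Inl l}" using ab A B by simp
          note mx = mixed[OF A(2) B(2) r]
          have rg: "\<rho> (fst (aL g) l) = fst (aK g) (\<rho> l)" using rho_eq[OF g B(2) mx(1) mx(2)] .
          have jg: "fst j (\<rho> (fst (aL g) l)) = fst (aL g) (fst j (\<rho> l))" using rg jeq[OF g mx(1)] by simp
          have fg: "fst f (\<rho> (fst (aL g) l)) = fst (aX g) (fst f (\<rho> l))" using rg feq[OF g mx(1)] by simp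
          note a1 = ar_prop[OF posL mx(2)] and a2 = ar_prop[OF posX mx(3)]
          have q1: "M.ql (fst (aL g) (fst j (\<rho> l))) (fst (aL g) l) = snd (aE g) (M.ql (fst j (\<rho> l)) l)"
            using fun_ar[OF posL posL fL[OF g] mx(2)] gfunD(3)[OF gQ g a1(1)] by simp
          have p1: "M.px (fst (aX g) x) (fst (aX g) (fst f (\<rho> l))) = snd (aE g) (M.px x (fst f (\<rho> l)))"
            using fun_ar[OF posX posX fX[OF g] mx(3)] gfunD(3)[OF gP0 g a2(1)] by simp
          note A1 = M.px[OF mx(3)] and B1 = M.ql[OF mx(2)]
          have cm: "Tgt E (M.px x (fst f (\<rho> l))) = Src E (M.ql (fst j (\<rho> l)) l)" using A1 B1 M.PQo[OF mx(1)] by simp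
          have "snd M.W (penc L X (oa aL aX g a) (oa aL aX g b)) =
                Cmp E (M.ql (fst j (\<rho> (fst (aL g) l))) (fst (aL g) l)) (M.px (fst (aX g) x) (fst f (\<rho> (fst (aL g) l))))"
            using A B M.W_rl funD(1)[OF fX[OF g]] funD(1)[OF fL[OF g]] notj[OF g] by (simp add: oa_simps)
          also have "\<dots> = Cmp E (snd (aE g) (M.ql (fst j (\<rho> l)) l)) (snd (aE g) (M.px x (fst f (\<rho> l))))"
            using jg fg q1 p1 by simp
          also have "\<dots> = snd (aE g) (Cmp E (M.ql (fst j (\<rho> l)) l) (M.px x (fst f (\<rho> l))))"
            using funD(6)[OF fE A1[THEN conjunct1] B1[THEN conjunct1] cm] by simp
          finally show ?thesis using A B M.W_rl by simp
        qed
      qed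
    qed
  qed
qed

lemma gpo:
  assumes gE: "gcat G E aE"
  shows "gpo_univ G K aK X aX L aL P act f j (UP L X) (VP K L X f j) E aE"
  unfolding gpo_univ_def
proof (intro allI impI)
  fix P0 Q assume a: "gfunctor G X aX E aE P0 \<and> gfunctor G L aL E aE Q \<and> ftr_eq K (fcomp P0 f) (fcomp Q j)"
  have a1: "is_functor X E P0" "is_functor L E Q" using gfunD(1) a by blast+
  interpret M: pmed K L X f j \<rho> E P0 Q
    by (rule pmed.intro, rule pcore_axioms) (unfold_locales, use gcatD(1)[OF gE] a1 a in auto)
  show "\<exists>W. gfunctor G P act E aE W \<and> ftr_eq X (fcomp W (UP L X)) P0 \<and> ftr_eq L (fcomp W (VP K L X f j)) Q \<and>
           (\<forall>W'. gfunctor G P act E aE W' \<and> ftr_eq X (fcomp W' (UP L X)) P0 \<and> ftr_eq L (fcomp W' (VP K L X f j)) Q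
                  \<longrightarrow> ftr_eq P W W')"
    using gW[OF gE] a M.WU M.WV M.W_unique gfunD(1) by blast
qed

end


lemma thin_upd: "B = {e a b |a b. a\<in>A \<and> b\<in>A \<and> R' a b} \<Longrightarrow> (thin Ob R e s t)\<lparr>Obj := A, Arr := B\<rparr> = thin A R' e s t"
  unfolding thin_def by simp

lemma ftr_eq_trans: "ftr_eq C F1 F2 \<Longrightarrow> ftr_eq C F2 F3 \<Longrightarrow> ftr_eq C F1 F3"
  unfolding ftr_eq_def by simp
lemma ftr_eq_sym: "ftr_eq C F1 F2 \<Longrightarrow> ftr_eq C F2 F1"
  unfolding ftr_eq_def by simp
lemma ftr_eq_comp: "ftr_eq C V V' \<Longrightarrow> ftr_eq C (fcomp Phi V) (fcomp Phi V')"
  unfolding ftr_eq_def fcomp_def by simp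

locale gfix = gcore K L X f j \<rho> G aK aL aX
  for K :: "('ko,'km) cat" and L :: "('lo,'lm) cat" and X :: "('xo,'xm) cat"
    and f :: "('ko,'km,'xo,'xm) ftr" and j :: "('ko,'km,'lo,'lm) ftr" and \<rho> :: "'lo \<Rightarrow> 'ko"
    and G :: "('g,'b) monoid_scheme" and aK :: "'g \<Rightarrow> ('ko,'km,'ko,'km) ftr"
    and aL :: "'g \<Rightarrow> ('lo,'lm,'lo,'lm) ftr" and aX :: "'g \<Rightarrow> ('xo,'xm,'xo,'xm) ftr" +
  fixes H :: "'g set"
  assumes sub: "H \<subseteq> carrier G"
begin

interpretation T: thinloc Ob R "penc L X" "psrc L X" "ptgt L X" by (rule thin)

abbreviation "K' \<equiv> fixcat K aK H"
abbreviation "L' \<equiv> fixcat L aL H"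
abbreviation "X' \<equiv> fixcat X aX H"

lemma hG: "h \<in> H \<Longrightarrow> h \<in> carrier G" using sub by blast
lemma subK: "k \<in> Obj K' \<Longrightarrow> k \<in> Obj K" by (simp add: fixcat_simps)
lemma subL: "k \<in> Obj L' \<Longrightarrow> k \<in> Obj L" by (simp add: fixcat_simps)
lemma subX: "k \<in> Obj X' \<Longrightarrow> k \<in> Obj X" by (simp add: fixcat_simps)
lemma subLa: "k \<in> Arr L' \<Longrightarrow> k \<in> Arr L" by (simp add: fixcat_simps)
lemma fKH: "h \<in> H \<Longrightarrow> is_functor K K (aK h)" by (rule fK[OF hG])
lemma fLH: "h \<in> H \<Longrightarrow> is_functor L L (aL h)" by (rule fL[OF hG])
lemma fXH: "h \<in> H \<Longrightarrow> is_functor X X (aX h)" by (rule fX[OF hG])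

lemma posK': "is_poset K'" by (rule fix_poset[OF posK fKH])
lemma posL': "is_poset L'" by (rule fix_poset[OF posL fLH])
lemma posX': "is_poset X'" by (rule fix_poset[OF posX fXH])
lemma funf': "is_functor K' X' f" by (rule fix_functor_g[OF gf sub fK])
lemma funj': "is_functor K' L' j" by (rule fix_functor_g[OF gj sub fK])

lemma fixed_j: assumes k: "k \<in> Obj K" and h: "h \<in> carrier G" and e: "fst (aL h) (fst j k) = fst j k"
  shows "fst (aK h) k = k"
proof -
  have "fst j (fst (aK h) k) = fst j k" using jeq[OF h k] e by simp
  moreover have "fst (aK h) k \<in> Obj K" using funD(1)[OF fK[OF h] k] .
  ultimately show ?thesis using injj k unfolding inj_on_def by blast
qed

lemma jK': assumes l: "l \<in> Obj L'" shows "l \<in> fst j ` Obj K' \<longleftrightarrow> l \<in> fst j ` Obj K"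
proof
  assume "l \<in> fst j ` Obj K'" thus "l \<in> fst j ` Obj K" using subK by blast
next
  assume "l \<in> fst j ` Obj K"
  then obtain k where k: "k \<in> Obj K" "l = fst j k" by blast
  have "\<forall>h\<in>H. fst (aK h) k = k" using fixed_j[OF k(1) hG] l k(2) by (simp add: fixcat_simps)
  hence "k \<in> Obj K'" using k(1) by (simp add: fixcat_simps)
  thus "l \<in> fst j ` Obj K'" using k(2) by blast
qed

lemma rho_fixed: assumes l: "l \<in> Obj L'" and k: "k \<in> Obj K" and le: "leq L (fst j k) l"
  shows "\<rho> l \<in> Obj K'"
proof -
  have l0: "l \<in> Obj L" using subL[OF l] .
  note r = rho[OF l0 k le]
  have "\<forall>h\<in>H. fst (aK h) (\<rho> l) = \<rho> l"
  proof
    fix h assume h: "h \<in> H"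
    have "\<rho> (fst (aL h) l) = fst (aK h) (\<rho> l)" using rho_eq[OF hG[OF h] l0 k le] .
    moreover have "fst (aL h) l = l" using l h by (simp add: fixcat_simps)
    ultimately show "fst (aK h) (\<rho> l) = \<rho> l" by simp
  qed
  thus ?thesis using r by (simp add: fixcat_simps)
qed

lemma sieve': assumes p: "\<phi> \<in> Arr L'" and t: "Tgt L' \<phi> \<in> fst j ` Obj K'"
  shows "Src L' \<phi> \<in> fst j ` Obj K'"
proof -
  have p0: "\<phi> \<in> Arr L" using subLa[OF p] .
  have t0: "Tgt L \<phi> \<in> fst j ` Obj K" using t subK unfolding fixcat_simps by blast
  have s0: "Src L \<phi> \<in> fst j ` Obj K" using sieve[OF p0 t0] .
  have s1: "Src L' \<phi> \<in> Obj L'" using catD(1)[OF posetD(1)[OF posL'] p] .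
  have "Src L' \<phi> = Src L \<phi>" unfolding fixcat_simps ..
  thus ?thesis using jK'[OF s1] s0 by simp
qed

lemma rho': assumes l: "l \<in> Obj L'" and k: "k \<in> Obj K'" and le: "leq L' (fst j k) l"
  shows "\<rho> l \<in> Obj K' \<and> leq L' (fst j (\<rho> l)) l \<and> leq K' k (\<rho> l)"
proof -
  have k0: "k \<in> Obj K" and l0: "l \<in> Obj L" using subK[OF k] subL[OF l] by simp_all
  have jk: "fst j k \<in> Obj L'" using funD(1)[OF funj' k] .
  have le0: "leq L (fst j k) l" using fix_leq[OF posL fLH jk l] le by blast
  note r = rho[OF l0 k0 le0]
  have rk: "\<rho> l \<in> Obj K'" by (rule rho_fixed[OF l k0 le0])
  have jr: "fst j (\<rho> l) \<in> Obj L'" using funD(1)[OF funj' rk] .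
  have 1: "leq L' (fst j (\<rho> l)) l" using fix_leq[OF posL fLH jr l] r by blast
  have 2: "leq K' k (\<rho> l)" using fix_leq[OF posK fKH k rk] r by blast
  show ?thesis using rk 1 2 by blast
qed

lemma pcore_fix: "pcore K' L' X' f j \<rho>"
  unfolding pcore_def
  using posK' posL' posX' funf' funj' inj_on_subset[OF injj] subK sieve' rho'
  by (intro conjI; blast)

interpretation F: pcore K' L' X' f j \<rho> by (rule pcore_fix)

lemma penc_eq: "penc L' X' = penc L X" "psrc L' X' = psrc L X" "ptgt L' X' = ptgt L X"
  unfolding penc_def psrc_def ptgt_def cz_def dz_def fixcat_simps by (rule refl)+

lemma UP_eq: "UP L' X' = UP L X" unfolding UP_def penc_eq by (simp add: fixcat_simps)

lemma vo_fix: assumes l: "l \<in> Obj L'" shows "vo K' f j l = vo K f j l"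
proof (cases "l \<in> fst j ` Obj K")
  case True
  then obtain k where k: "k \<in> Obj K'" "l = fst j k" using jK'[OF l] by blast
  have k0: "k \<in> Obj K" using subK k(1) by blast
  show ?thesis using k k0 F.vo_j[OF k(1)] vo_j[OF k0] by simp
next
  case False
  thus ?thesis using jK'[OF l] vo_n F.vo_n by simp
qed

lemma VP_eq: "ftr_eq L' (VP K' L' X' f j) (VP K L X f j)"
  unfolding ftr_eq_def
proof (intro conjI ballI)
  fix l assume "l \<in> Obj L'" thus "fst (VP K' L' X' f j) l = fst (VP K L X f j) l" using vo_fix by (simp add: VP_def)
next
  fix \<phi> assume p: "\<phi> \<in> Arr L'"
  have "Src L \<phi> \<in> Obj L'" "Tgt L \<phi> \<in> Obj L'" using catD(1,2)[OF posetD(1)[OF posL'] p] by (simp_all add: fixcat_simps)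
  thus "snd (VP K' L' X' f j) \<phi> = snd (VP K L X f j) \<phi>" using vo_fix by (simp add: VP_def penc_eq fixcat_simps)
qed

lemma R_eq: assumes a: "a \<in> POb K' L' X' j" and b: "b \<in> POb K' L' X' j"
  shows "PR K' L' X' f j a b = R a b"
  using a
proof (cases rule: POb_E)
  case A: (inl l)
  from b show ?thesis
  proof (cases rule: POb_E)
    case B: (inr x) thus ?thesis using A by (simp add: PR_simps)
  next
    case B: (inl l') thus ?thesis using A fix_leq[OF posL fLH A(2) B(2)] by (simp add: PR_simps)
  qed
next
  case A: (inr x)
  from b show ?thesis
  proof (cases rule: POb_E)
    case B: (inr x') thus ?thesis using A fix_leq[OF posX fXH A(2) B(2)] by (simp add: PR_simps)
  next
    case B: (inl l)
    have x0: "x \<in> Obj X" and l0: "l \<in> Obj L" using subX[OF A(2)] subL[OF B(2)] by simp_all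
    show ?thesis
    proof
      assume "PR K' L' X' f j a b"
      then obtain k where k: "k \<in> Obj K'" "leq X' x (fst f k)" "leq L' (fst j k) l" using A B by (auto simp: PR_simps)
      have "k \<in> Obj K" using subK k(1) by blast
      moreover have "leq X x (fst f k)" "leq L (fst j k) l" using k unfolding leq_def by (auto simp: fixcat_simps)
      ultimately show "R a b" using A B by (auto simp: PR_simps)
    next
      assume r: "R a b"
      have r': "R {Inr x} {Inl l}" using r A B by simp
      note m = mixed[OF x0 l0 r']
      have rk: "\<rho> l \<in> Obj K'" by (rule rho_fixed[OF B(2) m(1,2)])
      have fr: "fst f (\<rho> l) \<in> Obj X'" using funD(1)[OF funf' rk] .
      have jr: "fst j (\<rho> l) \<in> Obj L'" using funD(1)[OF funj' rk] .
      have "leq X' x (fst f (\<rho> l))" "leq L' (fst j (\<rho> l)) l"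
        using fix_leq[OF posX fXH A(2) fr] fix_leq[OF posL fLH jr B(2)] m by simp_all
      thus "PR K' L' X' f j a b" using A B rk by (auto simp: PR_simps)
    qed
  qed
qed

lemma obj_eq: "{a \<in> Ob. \<forall>h\<in>H. oa aL aX h a = a} = POb K' L' X' j"
proof (intro Set.set_eqI iffI)
  fix a assume a: "a \<in> {a \<in> Ob. \<forall>h\<in>H. oa aL aX h a = a}"
  hence a0: "a \<in> Ob" and fx: "\<And>h. h \<in> H \<Longrightarrow> oa aL aX h a = a" by blast+
  from a0 show "a \<in> POb K' L' X' j"
  proof (cases rule: POb_E)
    case (inl l)
    have "\<forall>h\<in>H. fst (aL h) l = l" using fx inl by (simp add: oa_simps)
    hence l': "l \<in> Obj L'" using inl by (simp add: fixcat_simps)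
    hence "l \<notin> fst j ` Obj K'" using jK' inl by blast
    thus ?thesis using l' inl POb_I(1) by metis
  next
    case (inr x)
    have "\<forall>h\<in>H. fst (aX h) x = x" using fx inr by (simp add: oa_simps)
    hence "x \<in> Obj X'" using inr by (simp add: fixcat_simps)
    thus ?thesis using inr POb_I(2) by metis
  qed
next
  fix a assume "a \<in> POb K' L' X' j"
  thus "a \<in> {a \<in> Ob. \<forall>h\<in>H. oa aL aX h a = a}"
  proof (cases rule: POb_E)
    case (inl l)
    have "l \<notin> fst j ` Obj K" using jK' inl by blast
    moreover have "l \<in> Obj L" "\<forall>h\<in>H. fst (aL h) l = l" using inl by (simp_all add: fixcat_simps)
    ultimately show ?thesis using inl POb_I(1)[of l L j K X] by (simp add: oa_simps)
  next
    case (inr x)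
    have "x \<in> Obj X" "\<forall>h\<in>H. fst (aX h) x = x" using inr by (simp_all add: fixcat_simps)
    thus ?thesis using inr POb_I(2)[of x X K L j] by (simp add: oa_simps)
  qed
qed

lemma arr_eq: "{m \<in> Arr P. \<forall>h\<in>H. snd (act h) m = m} =
   {penc L X a b |a b. a \<in> POb K' L' X' j \<and> b \<in> POb K' L' X' j \<and> PR K' L' X' f j a b}"
proof (intro Set.set_eqI iffI)
  fix m assume "m \<in> {m \<in> Arr P. \<forall>h\<in>H. snd (act h) m = m}"
  hence m: "m \<in> Arr P" and fx: "\<And>h. h \<in> H \<Longrightarrow> snd (act h) m = m" by blast+
  obtain a b where ab: "a\<in>Ob" "b\<in>Ob" "R a b" "m = penc L X a b" using m by (rule arrP_E)
  have "\<And>h. h \<in> H \<Longrightarrow> oa aL aX h a = a \<and> oa aL aX h b = b"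
  proof -
    fix h assume h: "h \<in> H"
    have "penc L X (oa aL aX h a) (oa aL aX h b) = penc L X a b" using fx[OF h] ab se te by (simp add: aP_def)
    thus "oa aL aX h a = a \<and> oa aL aX h b = b" using T.e_inj oa_ob[OF hG[OF h]] ab by blast
  qed
  hence "a \<in> POb K' L' X' j" "b \<in> POb K' L' X' j" using obj_eq ab by blast+
  thus "m \<in> {penc L X a b |a b. a \<in> POb K' L' X' j \<and> b \<in> POb K' L' X' j \<and> PR K' L' X' f j a b}"
    using R_eq ab by blast
next
  fix m assume "m \<in> {penc L X a b |a b. a \<in> POb K' L' X' j \<and> b \<in> POb K' L' X' j \<and> PR K' L' X' f j a b}"
  then obtain a b where ab: "a \<in> POb K' L' X' j" "b \<in> POb K' L' X' j" "PR K' L' X' f j a b" "m = penc L X a b" by blast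
  have a0: "a \<in> Ob" "\<forall>h\<in>H. oa aL aX h a = a" and b0: "b \<in> Ob" "\<forall>h\<in>H. oa aL aX h b = b"
    using ab(1,2) obj_eq by blast+
  have r: "R a b" using R_eq ab by simp
  have "m \<in> Arr P" using arrP_I[OF a0(1) b0(1) r] ab(4) by simp
  moreover have "\<forall>h\<in>H. snd (act h) m = m" using ab(4) a0 b0 se te by (simp add: aP_def)
  ultimately show "m \<in> {m \<in> Arr P. \<forall>h\<in>H. snd (act h) m = m}" by blast
qed

lemma fix_PC: "fixcat P act H = PC K' L' X' f j"
proof -
  have "fixcat P act H = P\<lparr>Obj := {a \<in> Ob. \<forall>h\<in>H. oa aL aX h a = a}, Arr := {m \<in> Arr P. \<forall>h\<in>H. snd (act h) m = m}\<rparr>"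
    unfolding fixcat_def by (simp add: P_simps aP_def)
  also have "\<dots> = P\<lparr>Obj := POb K' L' X' j, Arr := {penc L X a b |a b. a \<in> POb K' L' X' j \<and> b \<in> POb K' L' X' j \<and> PR K' L' X' f j a b}\<rparr>"
    unfolding obj_eq arr_eq ..
  also have "\<dots> = PC K' L' X' f j"
    unfolding PC_def[of K L X f j] PC_def[of K' L' X' f j] penc_eq
    by (rule thin_upd) simp
  finally show ?thesis .
qed

end


lemma gfun_comp: assumes "gfunctor G A a B b F" "gfunctor G B b C c F'"
  shows "gfunctor G A a C c (fcomp F' F)"
  unfolding gfunctor_def
proof (intro conjI ballI)
  show "is_functor A C (fcomp F' F)" by (rule fcomp_functor[OF gfunD(1)[OF assms(1)] gfunD(1)[OF assms(2)]])
next
  fix g assume g: "g \<in> carrier G"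
  show "ftr_eq A (fcomp (fcomp F' F) (a g)) (fcomp (c g) (fcomp F' F))"
    unfolding ftr_eq_def
  proof (intro conjI ballI)
    fix x assume x: "x \<in> Obj A"
    have "fst F x \<in> Obj B" using funD(1)[OF gfunD(1)[OF assms(1)] x] .
    thus "fst (fcomp (fcomp F' F) (a g)) x = fst (fcomp (c g) (fcomp F' F)) x"
      using gfunD(2)[OF assms(1) g x] gfunD(2)[OF assms(2) g] by (simp add: fcomp_def)
  next
    fix x assume x: "x \<in> Arr A"
    have "snd F x \<in> Arr B" using funD(2)[OF gfunD(1)[OF assms(1)] x] .
    thus "snd (fcomp (fcomp F' F) (a g)) x = snd (fcomp (c g) (fcomp F' F)) x"
      using gfunD(3)[OF assms(1) g x] gfunD(3)[OF assms(2) g] by (simp add: fcomp_def)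
  qed
qed

lemma gfun_id: "gcat G C a \<Longrightarrow> gfunctor G C a C a idF"
  unfolding gfunctor_def ftr_eq_def fcomp_def idF_def using idF_functor[unfolded idF_def] gcatD(1) by auto

lemma ftr_eq_chain: "ftr_eq B (fcomp Psi U) U1 \<Longrightarrow> ftr_eq B (fcomp Phi U1) U2 \<Longrightarrow> ftr_eq B (fcomp (fcomp Phi Psi) U) U2"
  unfolding ftr_eq_def fcomp_def by simp

lemma ftr_eq_idr: "ftr_eq B U U2 \<Longrightarrow> ftr_eq B (fcomp idF U) U2"
  unfolding ftr_eq_def fcomp_def idF_def by simp

lemma subcat_simps: "Obj (subcat C Ob M) = Ob" "Arr (subcat C Ob M) = M" "Src (subcat C Ob M) = Src C"
  "Tgt (subcat C Ob M) = Tgt C" "Idt (subcat C Ob M) = Idt C" "Cmp (subcat C Ob M) = Cmp C"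
  unfolding subcat_def by simp_all

theorem lemma4p8:
  fixes G :: "('g, 'b) monoid_scheme"
    and K :: "('ko, 'km) cat" and aK :: "'g \<Rightarrow> ('ko, 'km, 'ko, 'km) ftr"
    and L :: "('lo, 'lm) cat" and aL :: "'g \<Rightarrow> ('lo, 'lm, 'lo, 'lm) ftr"
    and X :: "('xo, 'xm) cat" and aX :: "'g \<Rightarrow> ('xo, 'xm, 'xo, 'xm) ftr"
    and j :: "('ko, 'km, 'lo, 'lm) ftr" and f :: "('ko, 'km, 'xo, 'xm) ftr"
    and Y :: "(('lo + 'xo) set, ('lm + 'xm) list set) cat"
    and aY :: "'g \<Rightarrow> (('lo + 'xo) set, ('lm + 'xm) list set, ('lo + 'xo) set, ('lm + 'xm) list set) ftr"
    and U :: "('xo, 'xm, ('lo + 'xo) set, ('lm + 'xm) list set) ftr"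
    and V :: "('lo, 'lm, ('lo + 'xo) set, ('lm + 'xm) list set) ftr"
  assumes "group G"
    and "gposet G K aK" and "gposet G L aL" and "gposet G X aX"
    and "dwyer_gmap G K aK L aL j"
    and "gfunctor G K aK X aX f"
    and "gpushout G K aK X aX L aL Y aY f j U V"
  shows "is_poset Y \<and>
    (\<forall>H. subgroup H G \<longrightarrow>
       comm_square (fixcat K aK H) (fixcat X aX H) (fixcat L aL H) (fixcat Y aY H) f j U V \<and>
       (\<forall>E :: ('eo, 'em) cat. category E \<longrightarrow>
          po_univ (fixcat K aK H) (fixcat X aX H) (fixcat L aL H) (fixcat Y aY H) f j U V E))"
proof -
  note grp = assms(1)
  have gK: "gcat G K aK" and posK: "is_poset K" using assms(2) unfolding gposet_def by simp_all
  have gL: "gcat G L aL" and posL: "is_poset L" using assms(3) unfolding gposet_def by simp_all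
  have gX: "gcat G X aX" and posX: "is_poset X" using assms(4) unfolding gposet_def by simp_all
  note gf = assms(6)
  have D: "gfunctor G K aK L aL j \<and> inj_on (fst j) (Obj K) \<and> inj_on (snd j) (Arr K) \<and>
     (\<forall>\<phi>\<in>Arr L. Tgt L \<phi> \<in> fst j ` Obj K \<longrightarrow> \<phi> \<in> snd j ` Arr K \<and> Src L \<phi> \<in> fst j ` Obj K) \<and>
     (\<exists>OT MT. is_subcat L OT MT \<and>
        (\<forall>\<phi>\<in>Arr L. Src L \<phi> \<in> OT \<longrightarrow> \<phi> \<in> MT \<and> Tgt L \<phi> \<in> OT) \<and>
        (\<forall>g\<in>carrier G. fst (aL g) ` OT \<subseteq> OT \<and> snd (aL g) ` MT \<subseteq> MT) \<and>
        fst j ` Obj K \<subseteq> OT \<and> snd j ` Arr K \<subseteq> MT \<and>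
        (\<exists>r \<epsilon>. gfunctor G (subcat L OT MT) aL K aK r \<and>
               adjunction K (subcat L OT MT) j r (\<lambda>a. Idt K a) \<epsilon>))"
    using assms(5) unfolding dwyer_gmap_def .
  have gj: "gfunctor G K aK L aL j" using D by (rule conjunct1)
  have injj: "inj_on (fst j) (Obj K)" using D by (rule conjunct2[THEN conjunct1])
  have sv: "\<forall>\<phi>\<in>Arr L. Tgt L \<phi> \<in> fst j ` Obj K \<longrightarrow> \<phi> \<in> snd j ` Arr K \<and> Src L \<phi> \<in> fst j ` Obj K"
    using D by (rule conjunct2[THEN conjunct2, THEN conjunct2, THEN conjunct1])
  have exT: "\<exists>OT MT. is_subcat L OT MT \<and>
        (\<forall>\<phi>\<in>Arr L. Src L \<phi> \<in> OT \<longrightarrow> \<phi> \<in> MT \<and> Tgt L \<phi> \<in> OT) \<and>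
        (\<forall>g\<in>carrier G. fst (aL g) ` OT \<subseteq> OT \<and> snd (aL g) ` MT \<subseteq> MT) \<and>
        fst j ` Obj K \<subseteq> OT \<and> snd j ` Arr K \<subseteq> MT \<and>
        (\<exists>r \<epsilon>. gfunctor G (subcat L OT MT) aL K aK r \<and>
               adjunction K (subcat L OT MT) j r (\<lambda>a. Idt K a) \<epsilon>)"
    using D by (rule conjunct2[THEN conjunct2, THEN conjunct2, THEN conjunct2])
  obtain OT MT where sub: "is_subcat L OT MT"
    and cos: "\<forall>\<phi>\<in>Arr L. Src L \<phi> \<in> OT \<longrightarrow> \<phi> \<in> MT \<and> Tgt L \<phi> \<in> OT"
    and stab: "\<forall>g\<in>carrier G. fst (aL g) ` OT \<subseteq> OT \<and> snd (aL g) ` MT \<subseteq> MT"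
    and jOT: "fst j ` Obj K \<subseteq> OT" and jMT: "snd j ` Arr K \<subseteq> MT"
    and ex: "\<exists>r \<epsilon>. gfunctor G (subcat L OT MT) aL K aK r \<and> adjunction K (subcat L OT MT) j r (\<lambda>a. Idt K a) \<epsilon>"
    using exT by (elim exE conjE) (rule that; blast)
  obtain r \<epsilon> where gr: "gfunctor G (subcat L OT MT) aL K aK r"
    and adj: "adjunction K (subcat L OT MT) j r (\<lambda>a. Idt K a) \<epsilon>" using ex by blast
  let ?T = "subcat L OT MT"
  have fr: "is_functor ?T K r" using adj unfolding adjunction_def by blast
  have eta: "nat_trans K K idF (fcomp r j) (\<lambda>a. Idt K a)" using adj unfolding adjunction_def by blast
  have eps: "nat_trans ?T ?T (fcomp j r) idF \<epsilon>" using adj unfolding adjunction_def by blast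
  have MT: "MT \<subseteq> Arr L" using sub unfolding is_subcat_def by blast
  note catK = posetD(1)[OF posK]
  have rj: "\<And>k. k \<in> Obj K \<Longrightarrow> fst r (fst j k) = k"
  proof -
    fix k assume k: "k \<in> Obj K"
    have "Tgt K (Idt K k) = fst (fcomp r j) k" using eta k unfolding nat_trans_def by blast
    thus "fst r (fst j k) = k" using catD(5)[OF catK k] unfolding fcomp_def by simp
  qed
  have inOT: "\<And>l k. l \<in> Obj L \<Longrightarrow> k \<in> Obj K \<Longrightarrow> leq L (fst j k) l \<Longrightarrow> l \<in> OT"
  proof -
    fix l k assume l: "l \<in> Obj L" and k: "k \<in> Obj K" and le: "leq L (fst j k) l"
    obtain \<phi> where p: "\<phi> \<in> Arr L" "Src L \<phi> = fst j k" "Tgt L \<phi> = l" using le unfolding leq_def by blast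
    have "Src L \<phi> \<in> OT" using p(2) jOT k by blast
    thus "l \<in> OT" using cos p by blast
  qed
  have rho: "\<And>l k. l \<in> Obj L \<Longrightarrow> k \<in> Obj K \<Longrightarrow> leq L (fst j k) l \<Longrightarrow>
                 fst r l \<in> Obj K \<and> leq L (fst j (fst r l)) l \<and> leq K k (fst r l)"
  proof -
    fix l k assume l: "l \<in> Obj L" and k: "k \<in> Obj K" and le: "leq L (fst j k) l"
    obtain \<phi> where p: "\<phi> \<in> Arr L" "Src L \<phi> = fst j k" "Tgt L \<phi> = l" using le unfolding leq_def by blast
    have sOT: "Src L \<phi> \<in> OT" using p(2) jOT k by blast
    have pM: "\<phi> \<in> MT" and lOT: "l \<in> OT" using cos p sOT by blast+
    have lT: "l \<in> Obj ?T" using lOT by (simp add: subcat_simps)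
    have pT: "\<phi> \<in> Arr ?T" using pM by (simp add: subcat_simps)
    have 1: "fst r l \<in> Obj K" using funD(1)[OF fr lT] .
    have "snd r \<phi> \<in> Arr K" "Src K (snd r \<phi>) = fst r (Src ?T \<phi>)" "Tgt K (snd r \<phi>) = fst r (Tgt ?T \<phi>)"
      using funD(2,3,4)[OF fr pT] by simp_all
    hence 3: "leq K k (fst r l)" unfolding leq_def using p rj[OF k] by (auto simp: subcat_simps)
    have "\<forall>a\<in>OT. \<epsilon> a \<in> MT \<and> Src L (\<epsilon> a) = fst j (fst r a) \<and> Tgt L (\<epsilon> a) = a"
      using eps unfolding nat_trans_def subcat_simps fcomp_def idF_def by simp
    hence "\<epsilon> l \<in> Arr L" "Src L (\<epsilon> l) = fst j (fst r l)" "Tgt L (\<epsilon> l) = l"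
      using lOT MT by auto
    hence 2: "leq L (fst j (fst r l)) l" unfolding leq_def by blast
    show "fst r l \<in> Obj K \<and> leq L (fst j (fst r l)) l \<and> leq K k (fst r l)" using 1 2 3 by blast
  qed
  have rho_eq: "\<And>g l k. g \<in> carrier G \<Longrightarrow> l \<in> Obj L \<Longrightarrow> k \<in> Obj K \<Longrightarrow> leq L (fst j k) l \<Longrightarrow>
        fst r (fst (aL g) l) = fst (aK g) (fst r l)"
  proof -
    fix g l k assume g: "g \<in> carrier G" and l: "l \<in> Obj L" and k: "k \<in> Obj K" and le: "leq L (fst j k) l"
    have "l \<in> Obj ?T" using inOT[OF l k le] by (simp add: subcat_simps)
    thus "fst r (fst (aL g) l) = fst (aK g) (fst r l)" using gfunD(2)[OF gr g] by blast
  qed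
  have sieve: "\<And>\<phi>. \<phi> \<in> Arr L \<Longrightarrow> Tgt L \<phi> \<in> fst j ` Obj K \<Longrightarrow> Src L \<phi> \<in> fst j ` Obj K"
    using sv by blast
  interpret C: gcore K L X f j "fst r" G aK aL aX
    apply (rule gcore.intro)
     apply (rule pcore.intro)
    using posK posL posX gfunD(1)[OF gf] gfunD(1)[OF gj] injj sieve rho apply (blast+)[8]
    apply (rule gcore_axioms.intro)
    using grp gK gL gX gf gj rho_eq by blast+
  let ?P = "PC K L X f j"
  let ?act = "aP L X aL aX"
  have gY: "gcat G Y aY" and gUY: "gfunctor G X aX Y aY U" and gVY: "gfunctor G L aL Y aY V"
    and commY: "ftr_eq K (fcomp U f) (fcomp V j)"
    and univY: "\<And>(E :: (('lo + 'xo) set, ('lm + 'xm) list set) cat) aE. gcat G E aE \<Longrightarrow> gpo_univ G K aK X aX L aL Y aY f j U V E aE"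
    using assms(7) unfolding gpushout_def by blast+
  note catY = gcatD(1)[OF gY]
  obtain Psi where gPsi: "gfunctor G Y aY ?P ?act Psi" and Psi1: "ftr_eq X (fcomp Psi U) (UP L X)"
    and Psi2: "ftr_eq L (fcomp Psi V) (VP K L X f j)"
    using univY[OF C.gcatP] C.gU C.gV C.comm unfolding gpo_univ_def by blast
  obtain Phi where gPhi: "gfunctor G ?P ?act Y aY Phi" and Phi1: "ftr_eq X (fcomp Phi (UP L X)) U"
    and Phi2: "ftr_eq L (fcomp Phi (VP K L X f j)) V"
    using C.gpo[OF gY] gUY gVY commY unfolding gpo_univ_def by blast
  have idY: "ftr_eq Y (fcomp Phi Psi) idF"
  proof -
    obtain W0 where W0: "\<And>W'. gfunctor G Y aY Y aY W' \<and> ftr_eq X (fcomp W' U) U \<and> ftr_eq L (fcomp W' V) V \<Longrightarrow> ftr_eq Y W0 W'"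
      using univY[OF gY] gUY gVY commY unfolding gpo_univ_def by blast
    have a: "ftr_eq Y W0 (fcomp Phi Psi)"
      using W0 gfun_comp[OF gPsi gPhi] ftr_eq_chain[OF Psi1 Phi1] ftr_eq_chain[OF Psi2 Phi2] by blast
    have b: "ftr_eq Y W0 idF"
      using W0 gfun_id[OF gY] ftr_eq_idr[of X U U] ftr_eq_idr[of L V V] by (simp add: ftr_eq_def)
    show ?thesis using ftr_eq_trans[OF ftr_eq_sym[OF a] b] .
  qed
  have fPsi: "is_functor Y ?P Psi" and fPhi: "is_functor ?P Y Phi" using gfunD(1) gPsi gPhi by blast+
  have PhiPsi_o: "\<And>y. y \<in> Obj Y \<Longrightarrow> fst Phi (fst Psi y) = y" using ftr_eqD(1)[OF idY] by (simp add: fcomp_def idF_def)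
  have PhiPsi_a: "\<And>y. y \<in> Arr Y \<Longrightarrow> snd Phi (snd Psi y) = y" using ftr_eqD(2)[OF idY] by (simp add: fcomp_def idF_def)
  have posY: "is_poset Y"
    unfolding is_poset_def
  proof (intro conjI catY ballI impI)
    fix a a' assume a: "a \<in> Arr Y" "a' \<in> Arr Y" and e: "Src Y a = Src Y a' \<and> Tgt Y a = Tgt Y a'"
    have "snd Psi a = snd Psi a'"
      apply (rule posetD(2)[OF C.posP])
      using funD(2,3,4)[OF fPsi] a e by simp_all
    thus "a = a'" using PhiPsi_a a by metis
  next
    fix a b assume a: "a \<in> Arr Y" "b \<in> Arr Y" and e: "Src Y a = Tgt Y b \<and> Tgt Y a = Src Y b"
    have "Src ?P (snd Psi a) = Tgt ?P (snd Psi a)"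
      apply (rule posetD(3)[OF C.posP, of _ "snd Psi b"])
      using funD(2,3,4)[OF fPsi] a e by simp_all
    hence "fst Psi (Src Y a) = fst Psi (Tgt Y a)" using funD(3,4)[OF fPsi a(1)] by simp
    thus "Src Y a = Tgt Y a" using PhiPsi_o catD(1,2)[OF catY a(1)] by metis
  qed
  have main: "\<And>H. subgroup H G \<Longrightarrow> comm_square (fixcat K aK H) (fixcat X aX H) (fixcat L aL H) (fixcat Y aY H) f j U V \<and>
       (\<forall>E :: ('eo, 'em) cat. category E \<longrightarrow>
          po_univ (fixcat K aK H) (fixcat X aX H) (fixcat L aL H) (fixcat Y aY H) f j U V E)"
  proof -
    fix H assume "subgroup H G"
    hence Hs: "H \<subseteq> carrier G" by (rule subgroup.subset)
    interpret D: gfix K L X f j "fst r" G aK aL aX H by (rule gfix.intro, rule C.gcore_axioms) (unfold_locales, rule Hs)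
    interpret F: pcore D.K' D.L' D.X' f j "fst r" by (rule D.pcore_fix)
    have fYH: "\<And>h. h \<in> H \<Longrightarrow> is_functor Y Y (aY h)" using gcatD(2)[OF gY] Hs by blast
    have catYH: "category (fixcat Y aY H)" by (rule fix_category[OF catY fYH])
    have fU': "is_functor D.X' (fixcat Y aY H) U" by (rule fix_functor_g[OF gUY Hs gcatD(2)[OF gX]])
    have fV': "is_functor D.L' (fixcat Y aY H) V" by (rule fix_functor_g[OF gVY Hs gcatD(2)[OF gL]])
    have commH: "ftr_eq D.K' (fcomp U f) (fcomp V j)" by (rule ftr_eq_mono[OF commY fix_sub])
    have cs: "comm_square D.K' D.X' D.L' (fixcat Y aY H) f j U V"
      unfolding comm_square_def
      using posetD(1)[OF D.posK'] posetD(1)[OF D.posX'] posetD(1)[OF D.posL'] catYH D.funf' D.funj' fU' fV' commH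
      by blast
    have fPhiH: "is_functor (PC D.K' D.L' D.X' f j) (fixcat Y aY H) Phi"
      using fix_functor_g[OF gPhi Hs C.act_functor] D.fix_PC by simp
    have fPsiH: "is_functor (fixcat Y aY H) (PC D.K' D.L' D.X' f j) Psi"
      using fix_functor_g[OF gPsi Hs gcatD(2)[OF gY]] D.fix_PC by simp
    have idH: "ftr_eq (fixcat Y aY H) (fcomp Phi Psi) idF" by (rule ftr_eq_mono[OF idY fix_sub])
    have U1: "ftr_eq D.X' (fcomp Psi U) (UP D.L' D.X')" unfolding D.UP_eq by (rule ftr_eq_mono[OF Psi1 fix_sub])
    have V1: "ftr_eq D.L' (fcomp Psi V) (VP D.K' D.L' D.X' f j)"
      by (rule ftr_eq_trans[OF ftr_eq_mono[OF Psi2 fix_sub] ftr_eq_sym[OF D.VP_eq]])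
    have U2: "ftr_eq D.X' (fcomp Phi (UP D.L' D.X')) U" unfolding D.UP_eq by (rule ftr_eq_mono[OF Phi1 fix_sub])
    have V2: "ftr_eq D.L' (fcomp Phi (VP D.K' D.L' D.X' f j)) V"
      by (rule ftr_eq_trans[OF ftr_eq_comp[OF D.VP_eq] ftr_eq_mono[OF Phi2 fix_sub]])
    have ptr: "\<And>E :: ('eo, 'em) cat. category E \<Longrightarrow> po_univ D.K' D.X' D.L' (fixcat Y aY H) f j U V E"
      by (rule po_transfer[OF F.univ fPhiH fPsiH idH U1 V1 U2 V2 F.funU F.funV fU' fV'])
    show "comm_square D.K' D.X' D.L' (fixcat Y aY H) f j U V \<and> (\<forall>E :: ('eo, 'em) cat. category E \<longrightarrow> po_univ D.K' D.X' D.L' (fixcat Y aY H) f j U V E)"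
      using cs ptr by blast
  qed
  show ?thesis using posY main by blast
qed


end
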